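(* Let $K\in\mathbb{N}$, $\alpha,\beta\in\Delta_K$ and $d\in\mathbb{R}_+^{K\times K}$, and let $(\alpha_n,\beta_n,d_n)\in\Delta_K\times\Delta_K\times\mathbb{R}_+^{K\times K}$ be measurable estimators. Suppose for a positive sequence $a_n\to\infty$ that $$a_n(\alpha_n-\alpha,\ \beta_n-\beta,\ d_n-d)\rightsquigarrow(\mathbb{G}^\alpha,\mathbb{G}^\beta,\mathbb{G}^d)\quad\text{in }\mathbb{R}^{2K+K^2},$$ with $(\mathbb{G}^\alpha,\mathbb{G}^\beta,\mathbb{G}^d)$ a tight (not necessarily Gaussian) random vector. Then $$a_n\big(W(\alpha_n,\beta_n,d_n)-W(\alpha,\beta,d)\big)\rightsquigarrow\inf_{\pi\in\Pi^\star_d(\alpha,\beta)}\langle\pi,\mathbb{G}^d\rangle+\sup_{f\in S_d(\alpha,\beta)}\langle f^{dd},\mathbb{G}^\alpha\rangle+\langle f^d,\mathbb{G}^\beta\rangle.$$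
   Context: $\Delta_K$ is the probability simplex in $\mathbb{R}^K$. $\Pi(\alpha,\beta)=\{\pi\in\mathbb{R}_+^{K\times K}:\sum_\ell\pi_{k\ell}=\alpha_k,\ \sum_k\pi_{k\ell}=\beta_\ell\}$ and $W(\alpha,\beta,d):=\min_{\pi\in\Pi(\alpha,\beta)}\sum_{k,\ell}\pi_{k\ell}d_{k\ell}$ (the sketched Wasserstein distance, with $d_{k\ell}$ a distance between mixture components $A_k,A_\ell$); $\Pi^\star_d(\alpha,\beta)$ is its set of minimizers and $\langle\pi,G\rangle=\sum_{k\ell}\pi_{k\ell}G_{k\ell}$. For $f\in\mathbb{R}^K$: $f^d_\ell=\min_kd_{k\ell}-f_k$ and $f^{dd}_k=\min_\ell d_{k\ell}-f^d_\ell$. $S_d(\alpha,\beta)$ is the set of maximizers of $\langle f^{dd},\alpha\rangle+\langle f^d,\beta\rangle$ over $f\in\mathbb{R}^K$ with $\|f\|_\infty\le2(2\max_{k,\ell}d_{k\ell}+1)$ (the maximum equals $W(\alpha,\beta,d)$). *)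

theory Defs
  imports "HOL-Probability.Probability"
begin

text \<open>Index set of mixture components: a finite type 'k, K = CARD('k).
  Vectors in R^K are real^'k, matrices in R^{K x K} are real^'k^'k.\<close>

definition prob_simplex :: "(real^'k::finite) set" where
  "prob_simplex = {x. (\<forall>k. 0 \<le> x$k) \<and> (\<Sum>k\<in>UNIV. x$k) = 1}"

definition couplings :: "real^'k::finite \<Rightarrow> real^'k \<Rightarrow> (real^'k^'k) set" where
  "couplings \<alpha> \<beta> = {\<pi>. (\<forall>k l. 0 \<le> \<pi>$k$l) \<and> (\<forall>k. (\<Sum>l\<in>UNIV. \<pi>$k$l) = \<alpha>$k)
                        \<and> (\<forall>l. (\<Sum>k\<in>UNIV. \<pi>$k$l) = \<beta>$l)}"

definition pairing :: "real^'k::finite^'k \<Rightarrow> real^'k^'k \<Rightarrow> real" where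
  "pairing \<pi> G = (\<Sum>k\<in>UNIV. \<Sum>l\<in>UNIV. \<pi>$k$l * G$k$l)"

definition SW :: "real^'k::finite \<Rightarrow> real^'k \<Rightarrow> real^'k^'k \<Rightarrow> real" where
  "SW \<alpha> \<beta> d = Inf ((\<lambda>\<pi>. pairing \<pi> d) ` couplings \<alpha> \<beta>)"

definition opt_couplings :: "real^'k::finite \<Rightarrow> real^'k \<Rightarrow> real^'k^'k \<Rightarrow> (real^'k^'k) set" where
  "opt_couplings \<alpha> \<beta> d = {\<pi> \<in> couplings \<alpha> \<beta>. pairing \<pi> d = SW \<alpha> \<beta> d}"

text \<open>d-transform f^d and double transform f^{dd}.\<close>
definition ctrans :: "real^'k::finite \<Rightarrow> real^'k^'k \<Rightarrow> real^'k" where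
  "ctrans f d = (\<chi> l. Min (range (\<lambda>k. d$k$l - f$k)))"

definition cctrans :: "real^'k::finite \<Rightarrow> real^'k^'k \<Rightarrow> real^'k" where
  "cctrans f d = (\<chi> k. Min (range (\<lambda>l. d$k$l - ctrans f d $ l)))"

definition dual_obj :: "real^'k::finite \<Rightarrow> real^'k \<Rightarrow> real^'k^'k \<Rightarrow> real^'k \<Rightarrow> real" where
  "dual_obj \<alpha> \<beta> d f = cctrans f d \<bullet> \<alpha> + ctrans f d \<bullet> \<beta>"

definition dual_box :: "real^'k::finite^'k \<Rightarrow> (real^'k) set" where
  "dual_box d = {f. \<forall>k. \<bar>f$k\<bar> \<le> 2 * (2 * Max {d$k'$l | k' l. True} + 1)}"

text \<open>S_d(alpha,beta): maximizers of the dual objective over the sup-norm box.\<close>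
definition dual_sols :: "real^'k::finite \<Rightarrow> real^'k \<Rightarrow> real^'k^'k \<Rightarrow> (real^'k) set" where
  "dual_sols \<alpha> \<beta> d = {f \<in> dual_box d. \<forall>g \<in> dual_box d. dual_obj \<alpha> \<beta> d g \<le> dual_obj \<alpha> \<beta> d f}"

definition weak_conv_rv ::
  "(nat \<Rightarrow> 'w measure) \<Rightarrow> (nat \<Rightarrow> 'w \<Rightarrow> 'a::metric_space) \<Rightarrow> 'v measure \<Rightarrow> ('v \<Rightarrow> 'a) \<Rightarrow> bool" where
  "weak_conv_rv M X N Y \<longleftrightarrow>
     (\<forall>h :: 'a \<Rightarrow> real. continuous_on UNIV h \<and> bounded (range h) \<longrightarrow>
        (\<lambda>n. \<integral>\<omega>. h (X n \<omega>) \<partial>M n) \<longlonglongrightarrow> (\<integral>\<omega>. h (Y \<omega>) \<partial>N))"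

end

theory Submission
  imports Defs
begin


lemma Min_range_le: "Min (range (a::'i::finite \<Rightarrow> real)) \<le> a i"
  by (rule Min_le) auto

lemma Min_range_ex: "\<exists>i. Min (range (a::'i::finite \<Rightarrow> real)) = a i"
proof -
  have "Min (range a) \<in> range a" by (rule Min_in) auto
  then show ?thesis by (metis rangeE)
qed

lemma Min_range_ge: "(\<And>i. c \<le> (a::'i::finite \<Rightarrow> real) i) \<Longrightarrow> c \<le> Min (range a)"
  by (metis Min_range_ex)

lemma Min_range_lip:
  assumes "\<And>i. \<bar>(a::'i::finite \<Rightarrow> real) i - b i\<bar> \<le> c"
  shows "\<bar>Min (range a) - Min (range b)\<bar> \<le> c"
proof -
  obtain i where i: "Min (range a) = a i" using Min_range_ex by blast
  obtain j where j: "Min (range b) = b j" using Min_range_ex by blast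
  have "b j \<le> b i" using j Min_range_le[of b i] by simp
  moreover have "a i \<le> a j" using i Min_range_le[of a j] by simp
  ultimately show ?thesis using assms[of i] assms[of j] i j by auto
qed

lemma ctrans_le: "ctrans f d $ l \<le> d$k$l - f$k"
  unfolding ctrans_def using Min_range_le[of "\<lambda>k. d$k$l - f$k"] by simp

lemma cctrans_le: "cctrans f d $ k \<le> d$k$l - ctrans f d $ l"
  unfolding cctrans_def using Min_range_le[of "\<lambda>l. d$k$l - ctrans f d $ l"] by simp

lemma cc_plus_c_le: "cctrans f d $ k + ctrans f d $ l \<le> d$k$l"
  using cctrans_le[of f d k l] by simp

lemma inner_sum: "(u::real^'k::finite) \<bullet> v = (\<Sum>k\<in>UNIV. u$k * v$k)"
  by (simp add: inner_vec_def)

lemma coupling_identity: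
  assumes "\<pi> \<in> couplings \<alpha> \<beta>"
  shows "u \<bullet> \<alpha> + v \<bullet> \<beta> = (\<Sum>k\<in>UNIV. \<Sum>l\<in>UNIV. \<pi>$k$l * (u$k + v$l))"
proof -
  have a: "\<And>k. \<alpha>$k = (\<Sum>l\<in>UNIV. \<pi>$k$l)" and b: "\<And>l. \<beta>$l = (\<Sum>k\<in>UNIV. \<pi>$k$l)"
    using assms by (auto simp: couplings_def)
  have "u \<bullet> \<alpha> = (\<Sum>k\<in>UNIV. u$k * (\<Sum>l\<in>UNIV. \<pi>$k$l))"
    by (simp add: inner_sum a)
  also have "\<dots> = (\<Sum>k\<in>UNIV. \<Sum>l\<in>UNIV. \<pi>$k$l * u$k)"
    by (simp add: sum_distrib_left mult.commute)
  finally have 1: "u \<bullet> \<alpha> = (\<Sum>k\<in>UNIV. \<Sum>l\<in>UNIV. \<pi>$k$l * u$k)" .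
  have "v \<bullet> \<beta> = (\<Sum>l\<in>UNIV. v$l * (\<Sum>k\<in>UNIV. \<pi>$k$l))"
    by (simp add: inner_sum b)
  also have "\<dots> = (\<Sum>l\<in>UNIV. \<Sum>k\<in>UNIV. \<pi>$k$l * v$l)"
    by (simp add: sum_distrib_left mult.commute)
  also have "\<dots> = (\<Sum>k\<in>UNIV. \<Sum>l\<in>UNIV. \<pi>$k$l * v$l)"
    by (rule sum.swap)
  finally have 2: "v \<bullet> \<beta> = (\<Sum>k\<in>UNIV. \<Sum>l\<in>UNIV. \<pi>$k$l * v$l)" .
  show ?thesis unfolding 1 2 by (simp add: distrib_left sum.distrib)
qed

lemma weak_duality_uv:
  assumes "\<pi> \<in> couplings \<alpha> \<beta>" and "\<And>k l. u$k + v$l \<le> d$k$l"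
  shows "u \<bullet> \<alpha> + v \<bullet> \<beta> \<le> pairing \<pi> d"
proof -
  have nn: "\<And>k l. 0 \<le> \<pi>$k$l" using assms(1) by (auto simp: couplings_def)
  show ?thesis unfolding coupling_identity[OF assms(1)] pairing_def
    by (intro sum_mono mult_left_mono) (auto simp: nn assms(2))
qed

lemma weak_duality:
  assumes "\<pi> \<in> couplings \<alpha> \<beta>"
  shows "dual_obj \<alpha> \<beta> d f \<le> pairing \<pi> d"
  unfolding dual_obj_def by (rule weak_duality_uv[OF assms cc_plus_c_le])

lemma prod_coupling:
  assumes "\<alpha> \<in> prob_simplex" "\<beta> \<in> prob_simplex"
  shows "(\<chi> k l. \<alpha>$k * \<beta>$l) \<in> couplings \<alpha> \<beta>"
proof -
  have "\<And>k. (\<Sum>l\<in>UNIV. \<alpha>$k * \<beta>$l) = \<alpha>$k * (\<Sum>l\<in>UNIV. \<beta>$l)" by (rule sum_distrib_left[symmetric])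
  moreover have "\<And>l. (\<Sum>k\<in>UNIV. \<alpha>$k * \<beta>$l) = (\<Sum>k\<in>UNIV. \<alpha>$k) * \<beta>$l" by (rule sum_distrib_right[symmetric])
  ultimately show ?thesis using assms by (auto simp: couplings_def prob_simplex_def)
qed

lemma couplings_ne: "\<alpha> \<in> prob_simplex \<Longrightarrow> \<beta> \<in> prob_simplex \<Longrightarrow> couplings \<alpha> \<beta> \<noteq> {}"
  using prod_coupling by blast

lemma coupling_total:
  assumes "\<pi> \<in> couplings \<alpha> \<beta>" "\<alpha> \<in> prob_simplex"
  shows "(\<Sum>k\<in>UNIV. \<Sum>l\<in>UNIV. \<pi>$k$l) = 1"
  using assms by (auto simp: couplings_def prob_simplex_def)

lemma coupling_le1:
  assumes "\<pi> \<in> couplings \<alpha> \<beta>" "\<alpha> \<in> prob_simplex"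
  shows "\<pi>$k$l \<le> 1" "0 \<le> \<pi>$k$l"
proof -
  have nn: "\<And>k l. 0 \<le> \<pi>$k$l" using assms(1) by (auto simp: couplings_def)
  have "\<pi>$k$l \<le> (\<Sum>l\<in>UNIV. \<pi>$k$l)" by (rule member_le_sum) (auto simp: nn)
  also have "\<dots> \<le> (\<Sum>k\<in>UNIV. \<Sum>l\<in>UNIV. \<pi>$k$l)" by (rule member_le_sum) (auto simp: nn sum_nonneg)
  finally show "\<pi>$k$l \<le> 1" using coupling_total[OF assms] by simp
  show "0 \<le> \<pi>$k$l" by (rule nn)
qed

lemma entry_le_norm: "\<bar>(z::real^'k::finite^'k)$k$l\<bar> \<le> norm z"
  by (rule order_trans[OF component_le_norm_cart Finite_Cartesian_Product.norm_nth_le])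

lemma pairing_bound:
  assumes "\<pi> \<in> couplings \<alpha> \<beta>" "\<alpha> \<in> prob_simplex"
  shows "\<bar>pairing \<pi> z\<bar> \<le> norm z"
proof -
  have nn: "\<And>k l. 0 \<le> \<pi>$k$l" using assms(1) by (auto simp: couplings_def)
  have "\<bar>pairing \<pi> z\<bar> \<le> (\<Sum>k\<in>UNIV. \<Sum>l\<in>UNIV. \<bar>\<pi>$k$l * z$k$l\<bar>)"
    unfolding pairing_def by (rule order_trans[OF sum_abs sum_mono[OF sum_abs]])
  also have "\<dots> \<le> (\<Sum>k\<in>UNIV. \<Sum>l\<in>UNIV. \<pi>$k$l * norm z)"
    by (intro sum_mono) (auto simp: abs_mult nn entry_le_norm mult_left_mono)
  also have "\<dots> = (\<Sum>k\<in>UNIV. \<Sum>l\<in>UNIV. \<pi>$k$l) * norm z"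
    by (simp add: sum_distrib_right)
  also have "\<dots> = norm z" using coupling_total[OF assms] by simp
  finally show ?thesis .
qed

lemma pairing_diff: "pairing \<pi> x - pairing \<pi> y = pairing \<pi> (x - y)"
  by (simp add: pairing_def sum_subtractf right_diff_distrib)

lemma pairing_add: "pairing \<pi> x + pairing \<pi> y = pairing \<pi> (x + y)"
  by (simp add: pairing_def sum.distrib distrib_left)

lemma pairing_nonneg: "\<pi> \<in> couplings \<alpha> \<beta> \<Longrightarrow> \<forall>k l. 0 \<le> d$k$l \<Longrightarrow> 0 \<le> pairing \<pi> d"
  by (auto simp: pairing_def couplings_def intro!: sum_nonneg)



definition Mx :: "real^'k::finite^'k \<Rightarrow> real" where
  "Mx d = Max {d$k'$l | k' l. True}"

abbreviation Bx :: "real^'k::finite^'k \<Rightarrow> real" where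
  "Bx d \<equiv> 2 * (2 * Mx d + 1)"

lemma Mx_set: "{d$k'$l | k' l. True} = (\<lambda>(k,l). d$k$l) ` UNIV"
  by auto

lemma Mx_ge: "d$k$l \<le> Mx d"
  unfolding Mx_def Mx_set by (rule Max_ge) auto

lemma Mx_ex: "\<exists>k l. Mx d = d$k$l"
proof -
  have "Mx d \<in> (\<lambda>(k,l). d$k$l) ` UNIV" unfolding Mx_def Mx_set by (rule Max_in) auto
  then show ?thesis by auto
qed

lemma Mx_lip: "\<bar>Mx d - Mx e\<bar> \<le> norm (d - e)"
proof -
  obtain k l where kl: "Mx d = d$k$l" using Mx_ex by blast
  obtain k' l' where kl': "Mx e = e$k'$l'" using Mx_ex by blast
  have 1: "\<bar>d$k$l - e$k$l\<bar> \<le> norm (d - e)" using entry_le_norm[of "d - e" k l] by simp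
  have 2: "\<bar>d$k'$l' - e$k'$l'\<bar> \<le> norm (d - e)" using entry_le_norm[of "d - e" k' l'] by simp
  show ?thesis using 1 2 kl kl' Mx_ge[of d k' l'] Mx_ge[of e k l] by auto
qed

lemma Mx_nonneg: "\<forall>k l. 0 \<le> d$k$l \<Longrightarrow> 0 \<le> Mx d"
  by (meson Mx_ge order_trans)

lemma dual_box_eq: "dual_box d = {f. \<forall>k. \<bar>f$k\<bar> \<le> Bx d}"
  unfolding dual_box_def Mx_def by simp

lemma ctrans_nth: "ctrans f d $ l = Min (range (\<lambda>k. d$k$l - f$k))"
  by (simp add: ctrans_def)

lemma cctrans_nth: "cctrans f d $ k = Min (range (\<lambda>l. d$k$l - ctrans f d $ l))"
  by (simp add: cctrans_def)

lemma ctrans_lip: "\<bar>ctrans f d $ l - ctrans g e $ l\<bar> \<le> norm (f - g) + norm (d - e)"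
  unfolding ctrans_nth
proof (rule Min_range_lip)
  fix k
  have 1: "\<bar>d$k$l - e$k$l\<bar> \<le> norm (d - e)" using entry_le_norm[of "d - e" k l] by simp
  have 2: "\<bar>f$k - g$k\<bar> \<le> norm (f - g)" using component_le_norm_cart[of "f - g" k] by simp
  show "\<bar>d $ k $ l - f $ k - (e $ k $ l - g $ k)\<bar> \<le> norm (f - g) + norm (d - e)"
    using 1 2 by linarith
qed

lemma cctrans_lip: "\<bar>cctrans f d $ k - cctrans g e $ k\<bar> \<le> 2 * (norm (f - g) + norm (d - e))"
  unfolding cctrans_nth
proof (rule Min_range_lip)
  fix l
  have 1: "\<bar>d$k$l - e$k$l\<bar> \<le> norm (d - e)" using entry_le_norm[of "d - e" k l] by simp
  have 2: "\<bar>ctrans f d $ l - ctrans g e $ l\<bar> \<le> norm (f - g) + norm (d - e)" by (rule ctrans_lip)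
  have 3: "0 \<le> norm (f - g)" "0 \<le> norm (d - e)" by simp_all
  show "\<bar>d $ k $ l - ctrans f d $ l - (e $ k $ l - ctrans g e $ l)\<bar> \<le> 2 * (norm (f - g) + norm (d - e))"
    using 1 2 3 by (smt (verit))
qed

lemma ctrans_zero: "ctrans 0 0 = 0"
  by (simp add: ctrans_def vec_eq_iff)

lemma cctrans_zero: "cctrans 0 0 = 0"
  by (simp add: cctrans_def ctrans_zero vec_eq_iff)

lemma ctrans_bound: "\<bar>ctrans f d $ l\<bar> \<le> norm f + norm d"
  using ctrans_lip[of f d l 0 0] by (simp add: ctrans_zero)

lemma cctrans_bound: "\<bar>cctrans f d $ k\<bar> \<le> 2 * (norm f + norm d)"
  using cctrans_lip[of f d k 0 0] by (simp add: cctrans_zero)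

lemma vec_norm_le: "(\<And>i. \<bar>(x::real^'k::finite)$i\<bar> \<le> (c::real)) \<Longrightarrow> norm x \<le> real CARD('k) * c"
proof -
  assume a: "\<And>i. \<bar>x$i\<bar> \<le> c"
  have "norm x \<le> (\<Sum>i\<in>UNIV. \<bar>x$i\<bar>)" by (rule norm_le_l1_cart)
  also have "\<dots> \<le> (\<Sum>i\<in>(UNIV::'k set). c)" by (rule sum_mono) (rule a)
  finally show ?thesis by simp
qed

lemma ctrans_norm: "norm (ctrans f d) \<le> CARD('k) * (2 * (norm f + norm d))"
  for f :: "real^'k::finite"
  by (rule vec_norm_le, rule order_trans[OF ctrans_bound], simp)

lemma cctrans_norm: "norm (cctrans f d) \<le> CARD('k) * (2 * (norm f + norm d))"
  for f :: "real^'k::finite"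
  by (rule vec_norm_le) (rule cctrans_bound)

lemma inner_vec_lip:
  "\<bar>(x::real^'k::finite) \<bullet> a - y \<bullet> b\<bar> \<le> norm (x - y) * norm a + norm y * norm (a - b)"
proof -
  have "x \<bullet> a - y \<bullet> b = (x - y) \<bullet> a + y \<bullet> (a - b)" by (simp add: inner_diff_left inner_diff_right)
  then have "\<bar>x \<bullet> a - y \<bullet> b\<bar> \<le> \<bar>(x - y) \<bullet> a\<bar> + \<bar>y \<bullet> (a - b)\<bar>" by linarith
  also have "\<dots> \<le> norm (x - y) * norm a + norm y * norm (a - b)"
    by (intro add_mono Cauchy_Schwarz_ineq2)
  finally show ?thesis .
qed

lemma lip_cont:
  fixes F :: "'a::metric_space \<Rightarrow> real"
  assumes "\<And>x y. \<bar>F x - F y\<bar> \<le> L * dist x y"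
  shows "continuous_on S F"
  unfolding continuous_on_iff
proof (intro ballI allI impI)
  fix x e assume "x \<in> S" "(0::real) < e"
  show "\<exists>d>0. \<forall>x'\<in>S. dist x' x < d \<longrightarrow> dist (F x') (F x) < e"
  proof (intro exI[of _ "e / (\<bar>L\<bar> + 1)"] conjI ballI impI)
    show "0 < e / (\<bar>L\<bar> + 1)" using \<open>0 < e\<close> by simp
    fix x' assume "dist x' x < e / (\<bar>L\<bar> + 1)"
    then have "(\<bar>L\<bar> + 1) * dist x' x < e" by (simp add: field_simps)
    moreover have "\<bar>F x' - F x\<bar> \<le> (\<bar>L\<bar> + 1) * dist x' x"
      using assms[of x' x] by (smt (verit) mult_right_mono zero_le_dist)
    ultimately show "dist (F x') (F x) < e" by (simp add: dist_real_def)
  qed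
qed

lemma dual_obj_lip_f:
  "\<bar>dual_obj \<alpha> \<beta> d f - dual_obj \<alpha> \<beta> d g\<bar> \<le> (2 * CARD('k) * (norm \<alpha> + norm \<beta>)) * dist f g"
  for f :: "real^'k::finite"
proof -
  have 1: "norm (cctrans f d - cctrans g d) \<le> CARD('k) * (2 * norm (f - g))"
    by (rule vec_norm_le) (use cctrans_lip[of f d _ g d] in simp)
  have 2: "norm (ctrans f d - ctrans g d) \<le> CARD('k) * (2 * norm (f - g))"
    by (rule vec_norm_le, simp, rule order_trans[OF ctrans_lip], simp)
  have "\<bar>dual_obj \<alpha> \<beta> d f - dual_obj \<alpha> \<beta> d g\<bar>
     \<le> \<bar>cctrans f d \<bullet> \<alpha> - cctrans g d \<bullet> \<alpha>\<bar> + \<bar>ctrans f d \<bullet> \<beta> - ctrans g d \<bullet> \<beta>\<bar>"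
    unfolding dual_obj_def by linarith
  also have "\<dots> \<le> norm (cctrans f d - cctrans g d) * norm \<alpha> + norm (ctrans f d - ctrans g d) * norm \<beta>"
    using inner_vec_lip[of "cctrans f d" \<alpha> "cctrans g d" \<alpha>] inner_vec_lip[of "ctrans f d" \<beta> "ctrans g d" \<beta>]
    by simp
  also have "\<dots> \<le> (CARD('k) * (2 * norm (f - g))) * norm \<alpha> + (CARD('k) * (2 * norm (f - g))) * norm \<beta>"
    by (intro add_mono mult_right_mono 1 2) auto
  also have "\<dots> = (2 * CARD('k) * (norm \<alpha> + norm \<beta>)) * dist f g"
    by (simp add: dist_norm algebra_simps)
  finally show ?thesis .
qed

lemma dual_obj_cont_f: "continuous_on S (dual_obj \<alpha> \<beta> d)"
  by (rule lip_cont[OF dual_obj_lip_f])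

lemma compact_dual_box: "compact (dual_box d)"
proof -
  have "dual_box d = cbox (\<chi> k. - Bx d) (\<chi> k. Bx d)"
    unfolding dual_box_eq apply (auto simp: mem_box_cart abs_le_iff minus_le_iff)
     apply (drule_tac x=i in spec, linarith)
    apply (drule_tac x=k in spec, linarith)
    done
  then show ?thesis by simp
qed

lemma zero_in_dual_box: "\<forall>k l. 0 \<le> d$k$l \<Longrightarrow> 0 \<in> dual_box d"
  unfolding dual_box_eq using Mx_nonneg[of d] by auto



lemma Min_range_shift: "Min (range (\<lambda>i. (a::'i::finite \<Rightarrow> real) i + c)) = Min (range a) + c"
proof (rule antisym)
  obtain i where i: "Min (range a) = a i" using Min_range_ex by blast
  show "Min (range (\<lambda>i. a i + c)) \<le> Min (range a) + c" using Min_range_le[of "\<lambda>i. a i + c" i] i by simp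
  show "Min (range a) + c \<le> Min (range (\<lambda>i. a i + c))"
    by (rule Min_range_ge) (simp add: Min_range_le)
qed

lemma ctrans_shift_nth: "ctrans (\<chi> k. f$k - c) d $ l = ctrans f d $ l + c"
proof -
  have e: "(\<lambda>k. d$k$l - (\<chi> k. f$k - c)$k) = (\<lambda>k. d$k$l - f$k + c)" by auto
  show ?thesis unfolding ctrans_nth e Min_range_shift ..
qed

lemma ctrans_shift: "ctrans (\<chi> k. f$k - c) d = (\<chi> l. ctrans f d $ l + c)"
  by (simp add: vec_eq_iff ctrans_shift_nth)

lemma cctrans_shift_nth: "cctrans (\<chi> k. f$k - c) d $ k = cctrans f d $ k - c"
proof -
  have e: "(\<lambda>l. d$k$l - ctrans (\<chi> k. f$k - c) d $ l) = (\<lambda>l. d$k$l - ctrans f d $ l + (- c))"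
    by (auto simp: ctrans_shift_nth)
  show ?thesis unfolding cctrans_nth[of "\<chi> k. f$k - c"] e Min_range_shift cctrans_nth[of f] by simp
qed

lemma cctrans_shift: "cctrans (\<chi> k. f$k - c) d = (\<chi> k. cctrans f d $ k - c)"
  by (simp add: vec_eq_iff cctrans_shift_nth)

lemma pairing_add_left: "pairing (\<pi> + \<pi>') d = pairing \<pi> d + pairing \<pi>' d"
  by (simp add: pairing_def sum.distrib distrib_right)

lemma ctrans_le': "u$k \<le> d$k$l - ctrans u d $ l"
  using ctrans_le[of u d l k] by linarith

lemma cctrans_le': "ctrans u d $ l \<le> d$k$l - cctrans u d $ k"
  using cctrans_le[of u d k l] by linarith

lemma inner_shift: "(\<chi> k. x$k + c) \<bullet> (\<alpha>::real^'k::finite) = x \<bullet> \<alpha> + c * (\<Sum>k\<in>UNIV. \<alpha>$k)"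
  by (simp add: inner_sum distrib_right sum.distrib sum_distrib_left)

lemma dual_obj_shift:
  assumes "\<alpha> \<in> prob_simplex" "\<beta> \<in> prob_simplex"
  shows "dual_obj \<alpha> \<beta> d (\<chi> k. f$k - c) = dual_obj \<alpha> \<beta> d f"
proof -
  have s: "(\<Sum>k\<in>UNIV. \<alpha>$k) = 1" "(\<Sum>k\<in>UNIV. \<beta>$k) = 1" using assms by (auto simp: prob_simplex_def)
  have 1: "cctrans (\<chi> k. f$k - c) d = (\<chi> k. cctrans f d $ k + (- c))"
    by (simp add: cctrans_shift)
  show ?thesis unfolding dual_obj_def 1 ctrans_shift inner_shift s by simp
qed

lemma cctrans_ge: "u$k \<le> cctrans u d $ k"
  unfolding cctrans_nth by (rule Min_range_ge) (rule ctrans_le')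

lemma ctrans_cc: "ctrans (cctrans u d) d = ctrans u d"
proof -
  have "ctrans (cctrans u d) d $ l = ctrans u d $ l" for l
  proof (rule antisym)
    show "ctrans (cctrans u d) d $ l \<le> ctrans u d $ l"
      unfolding ctrans_nth[of "cctrans u d"] ctrans_nth[of u]
      by (rule Min_range_ge) (smt (verit) Min_range_le cctrans_ge)
    show "ctrans u d $ l \<le> ctrans (cctrans u d) d $ l"
      unfolding ctrans_nth[of "cctrans u d"]
      by (rule Min_range_ge) (rule cctrans_le')
  qed
  then show ?thesis by (simp add: vec_eq_iff)
qed

lemma cctrans_cc: "cctrans (cctrans u d) d = cctrans u d"
  unfolding cctrans_def[of "cctrans u d"] ctrans_cc by (simp add: cctrans_def)

lemma cctrans_osc:
  assumes "\<forall>k l. 0 \<le> d$k$l"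
  shows "cctrans u d $ k - cctrans u d $ k' \<le> Mx d"
proof -
  obtain l where l: "cctrans u d $ k' = d$k'$l - ctrans u d $ l"
    using Min_range_ex[of "\<lambda>l. d$k'$l - ctrans u d $ l"] unfolding cctrans_nth by blast
  have "cctrans u d $ k \<le> d$k$l - ctrans u d $ l" by (rule cctrans_le)
  then show ?thesis using l Mx_ge[of d k l] assms by (smt (verit))
qed

lemma inner_mono_nonneg:
  assumes "\<And>k. (x::real^'k::finite)$k \<le> y$k" "\<And>k. 0 \<le> \<alpha>$k"
  shows "x \<bullet> \<alpha> \<le> y \<bullet> \<alpha>"
  unfolding inner_sum by (intro sum_mono mult_right_mono assms)

lemma dual_rep:
  assumes "\<alpha> \<in> prob_simplex" "\<beta> \<in> prob_simplex" "\<forall>k l. 0 \<le> d$k$l"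
    and uv: "\<And>k l. u$k + v$l \<le> d$k$l"
  shows "\<exists>f \<in> dual_box d. u \<bullet> \<alpha> + v \<bullet> \<beta> \<le> dual_obj \<alpha> \<beta> d f"
proof -
  define w where "w = cctrans u d"
  define f where "f = (\<chi> k. w$k - w$undefined)"
  have nn: "\<And>k. 0 \<le> \<alpha>$k" "\<And>k. 0 \<le> \<beta>$k" using assms(1,2) by (auto simp: prob_simplex_def)
  have "f \<in> dual_box d"
    unfolding dual_box_eq f_def w_def
    using cctrans_osc[OF assms(3), of u] Mx_nonneg[OF assms(3)] by (auto simp: abs_le_iff) (smt (verit))+
  moreover have "dual_obj \<alpha> \<beta> d f = dual_obj \<alpha> \<beta> d w"
    unfolding f_def by (rule dual_obj_shift[OF assms(1,2)])
  moreover have "dual_obj \<alpha> \<beta> d w = w \<bullet> \<alpha> + ctrans u d \<bullet> \<beta>"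
    unfolding dual_obj_def w_def cctrans_cc ctrans_cc ..
  moreover have "u \<bullet> \<alpha> \<le> w \<bullet> \<alpha>"
    unfolding w_def by (rule inner_mono_nonneg[OF cctrans_ge nn(1)])
  moreover have "v \<bullet> \<beta> \<le> ctrans u d \<bullet> \<beta>"
  proof (rule inner_mono_nonneg[OF _ nn(2)])
    fix l show "v$l \<le> ctrans u d $ l"
      unfolding ctrans_nth by (rule Min_range_ge) (smt (verit) uv)
  qed
  ultimately show ?thesis by force
qed

lemma SW_le:
  assumes "\<pi> \<in> couplings \<alpha> \<beta>" "\<forall>k l. 0 \<le> d$k$l"
  shows "SW \<alpha> \<beta> d \<le> pairing \<pi> d"
  unfolding SW_def
proof (rule cInf_lower)
  show "pairing \<pi> d \<in> (\<lambda>\<pi>. pairing \<pi> d) ` couplings \<alpha> \<beta>" using assms(1) by blast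
  show "bdd_below ((\<lambda>\<pi>. pairing \<pi> d) ` couplings \<alpha> \<beta>)"
    by (rule bdd_belowI[of _ 0]) (use pairing_nonneg assms(2) in blast)
qed

lemma dual_le_SW:
  assumes "\<alpha> \<in> prob_simplex" "\<beta> \<in> prob_simplex"
  shows "dual_obj \<alpha> \<beta> d f \<le> SW \<alpha> \<beta> d"
  unfolding SW_def
proof (rule cInf_greatest)
  show "(\<lambda>\<pi>. pairing \<pi> d) ` couplings \<alpha> \<beta> \<noteq> {}" using couplings_ne[OF assms] by blast
  fix x assume "x \<in> (\<lambda>\<pi>. pairing \<pi> d) ` couplings \<alpha> \<beta>"
  then obtain \<pi> where "\<pi> \<in> couplings \<alpha> \<beta>" "x = pairing \<pi> d" by blast
  then show "dual_obj \<alpha> \<beta> d f \<le> x" using weak_duality by blast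
qed

definition rowsum :: "real^'k::finite^'k \<Rightarrow> real^'k" where "rowsum \<pi> = (\<chi> k. \<Sum>l\<in>UNIV. \<pi>$k$l)"
definition colsum :: "real^'k::finite^'k \<Rightarrow> real^'k" where "colsum \<pi> = (\<chi> l. \<Sum>k\<in>UNIV. \<pi>$k$l)"
definition Emat :: "'k::finite \<Rightarrow> 'k \<Rightarrow> real^'k^'k" where "Emat k l = (\<chi> i j. if i = k \<and> j = l then 1 else 0)"

lemma in_couplings_rowcol: "\<forall>k l. 0 \<le> \<pi>$k$l \<Longrightarrow> \<pi> \<in> couplings (rowsum \<pi>) (colsum \<pi>)"
  by (simp add: couplings_def rowsum_def colsum_def)

lemma Emat_sum: "(\<Sum>k'\<in>UNIV. \<Sum>l'\<in>UNIV. Emat k l $ k' $ l' * X k' l') = X k l"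
proof -
  have "\<And>k'. (\<Sum>l'\<in>UNIV. Emat k l $ k' $ l' * X k' l') = (if k' = k then X k l else 0)"
  proof -
    fix k'
    have "\<And>l'. Emat k l $ k' $ l' * X k' l' = (if l' = l then (if k' = k then X k l else 0) else 0)"
      by (simp add: Emat_def)
    then show "(\<Sum>l'\<in>UNIV. Emat k l $ k' $ l' * X k' l') = (if k' = k then X k l else 0)"
      by (simp only: sum.delta finite UNIV_I if_True)
  qed
  then show ?thesis by (simp only: sum.delta finite UNIV_I if_True)
qed

lemma rowsum_add: "rowsum (\<pi> + \<pi>') = rowsum \<pi> + rowsum \<pi>'"
  by (simp add: rowsum_def vec_eq_iff sum.distrib)
lemma colsum_add: "colsum (\<pi> + \<pi>') = colsum \<pi> + colsum \<pi>'"
  by (simp add: colsum_def vec_eq_iff sum.distrib)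
lemma rowsum_scale: "rowsum (c *\<^sub>R \<pi>) = c *\<^sub>R rowsum \<pi>"
  by (simp add: rowsum_def vec_eq_iff sum_distrib_left)
lemma colsum_scale: "colsum (c *\<^sub>R \<pi>) = c *\<^sub>R colsum \<pi>"
  by (simp add: colsum_def vec_eq_iff sum_distrib_left)
lemma rowsum_zero: "rowsum 0 = 0" by (simp add: rowsum_def vec_eq_iff)
lemma colsum_zero: "colsum 0 = 0" by (simp add: colsum_def vec_eq_iff)
lemma pairing_scale: "pairing (c *\<^sub>R \<pi>) d = c * pairing \<pi> d"
  by (simp add: pairing_def sum_distrib_left mult.assoc)
lemma pairing_zero: "pairing 0 d = 0" by (simp add: pairing_def)

lemma split_sum: "(\<Sum>k\<in>UNIV. \<Sum>l\<in>UNIV. \<pi>$k$l * (A$k + B$l + c * d$k$l))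
   = (\<Sum>k\<in>UNIV. \<Sum>l\<in>UNIV. \<pi>$k$l * (A$k + B$l)) + c * pairing \<pi> d"
proof -
  have "c * pairing \<pi> d = (\<Sum>k\<in>UNIV. \<Sum>l\<in>UNIV. \<pi>$k$l * (c * d$k$l))"
    unfolding pairing_def sum_distrib_left by (simp add: mult.left_commute)
  moreover have "(\<Sum>k\<in>UNIV. \<Sum>l\<in>UNIV. \<pi>$k$l * (A$k + B$l + c * d$k$l))
     = (\<Sum>k\<in>UNIV. \<Sum>l\<in>UNIV. \<pi>$k$l * (A$k + B$l)) + (\<Sum>k\<in>UNIV. \<Sum>l\<in>UNIV. \<pi>$k$l * (c * d$k$l))"
    by (simp only: distrib_left[of "\<pi>$_$_" "A$_ + B$_"] sum.distrib)
  ultimately show ?thesis by simp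
qed

lemma farkas_step:
  assumes \<alpha>: "\<alpha> \<in> prob_simplex" and \<beta>: "\<beta> \<in> prob_simplex" and dnn: "\<forall>k l. 0 \<le> d$k$l" and "0 < \<epsilon>"
  shows "\<exists>u v. (\<forall>k l. u$k + v$l \<le> d$k$l) \<and> SW \<alpha> \<beta> d - \<epsilon> < u \<bullet> \<alpha> + v \<bullet> \<beta>"
proof -
  define L where "L = (\<lambda>\<pi> (s::real). ((rowsum \<pi>, colsum \<pi>), pairing \<pi> d + s))"
  define Q where "Q = {L \<pi> s | \<pi> s. (\<forall>k l. 0 \<le> \<pi>$k$l) \<and> 0 \<le> s}"
  define G where "G = (\<lambda>(k,l). L (Emat k l) 0) ` UNIV \<union> {L 0 1}"
  have finG: "finite G" unfolding G_def by simp
  have cQ: "convex_cone Q"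
    unfolding convex_cone_iff
  proof (intro conjI ballI allI impI)
    show "0 \<in> Q" unfolding Q_def
    proof (rule CollectI, intro exI conjI)
      show "0 = L 0 0" by (simp add: L_def rowsum_zero colsum_zero pairing_zero zero_prod_def)
    qed auto
  next
    fix x y assume "x \<in> Q" "y \<in> Q"
    then obtain \<pi> s \<pi>' s' where x: "x = L \<pi> s" "\<forall>k l. 0 \<le> \<pi>$k$l" "0 \<le> s"
      and y: "y = L \<pi>' s'" "\<forall>k l. 0 \<le> \<pi>'$k$l" "0 \<le> s'" unfolding Q_def by blast
    have "x + y = L (\<pi> + \<pi>') (s + s')"
      unfolding x y L_def by (simp only: rowsum_add colsum_add pairing_add_left prod_eq_iff fst_add snd_add fst_conv snd_conv) simp
    moreover have "\<forall>k l. 0 \<le> (\<pi> + \<pi>')$k$l" using x(2) y(2) by simp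
    moreover have "0 \<le> s + s'" using x(3) y(3) by simp
    ultimately show "x + y \<in> Q" unfolding Q_def by blast
  next
    fix x and c :: real assume "x \<in> Q" "0 \<le> c"
    then obtain \<pi> s where x: "x = L \<pi> s" "\<forall>k l. 0 \<le> \<pi>$k$l" "0 \<le> s" unfolding Q_def by blast
    have "c *\<^sub>R x = L (c *\<^sub>R \<pi>) (c * s)"
      unfolding x L_def by (simp only: rowsum_scale colsum_scale pairing_scale prod_eq_iff fst_scaleR snd_scaleR fst_conv snd_conv) (simp add: distrib_left)
    moreover have "\<forall>k l. 0 \<le> (c *\<^sub>R \<pi>)$k$l" using x(2) \<open>0 \<le> c\<close> by simp
    moreover have "0 \<le> c * s" using x(3) \<open>0 \<le> c\<close> by simp
    ultimately show "c *\<^sub>R x \<in> Q" unfolding Q_def by blast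
  qed
  have Enn: "\<forall>i j. 0 \<le> Emat k l $ i $ j" for k l by (simp add: Emat_def)
  have GQ1: "L (Emat k l) 0 \<in> Q" for k l unfolding Q_def using Enn[of k l] by blast
  have GQ2: "L 0 1 \<in> Q" unfolding Q_def by (intro CollectI exI[of _ 0] exI[of _ "1::real"] conjI) simp_all
  have GQ: "G \<subseteq> Q" unfolding G_def using GQ1 GQ2 by auto
  define D where "D = convex_cone hull G"
  have DQ: "D \<subseteq> Q" unfolding D_def by (rule hull_minimal[where S=convex_cone, OF GQ cQ])
  have cD: "convex_cone D" unfolding D_def by (rule convex_cone_convex_cone_hull)
  have cvD: "convex D" unfolding D_def by (rule convex_convex_cone_hull)
  have clD: "closed D" unfolding D_def by (rule closed_convex_cone_hull[OF finG])
  have GD: "G \<subseteq> D" unfolding D_def by (rule hull_subset)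
  define p where "p = ((\<alpha>, \<beta>), SW \<alpha> \<beta> d - \<epsilon>)"
  have "p \<notin> Q"
  proof
    assume "p \<in> Q"
    then obtain \<pi> s where ps: "p = L \<pi> s" "\<forall>k l. 0 \<le> \<pi>$k$l" "0 \<le> s" unfolding Q_def by blast
    have "\<alpha> = rowsum \<pi>" "\<beta> = colsum \<pi>" "SW \<alpha> \<beta> d - \<epsilon> = pairing \<pi> d + s"
      using ps(1) unfolding p_def L_def by auto
    then have "\<pi> \<in> couplings \<alpha> \<beta>" using in_couplings_rowcol[OF ps(2)] by simp
    from SW_le[OF this dnn] show False using \<open>SW \<alpha> \<beta> d - \<epsilon> = pairing \<pi> d + s\<close> \<open>0 \<le> s\<close> \<open>0 < \<epsilon>\<close> by linarith
  qed
  then have "p \<notin> D" using DQ by blast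
  from separating_hyperplane_closed_point[OF cvD clD this]
  obtain a b where ab: "a \<bullet> p < b" "\<forall>x\<in>D. b < a \<bullet> x" by blast
  have "0 \<in> D" using cD by (simp add: convex_cone_iff)
  then have "b < a \<bullet> 0" using ab(2) by blast
  then have b0: "b < 0" by simp
  have gen: "0 \<le> a \<bullet> g" if "g \<in> G" for g
  proof (rule ccontr)
    assume "\<not> 0 \<le> a \<bullet> g"
    then have neg: "a \<bullet> g < 0" by simp
    define t where "t = b / (a \<bullet> g)"
    have "0 \<le> t" unfolding t_def using neg b0 by (simp add: divide_nonpos_neg less_imp_le)
    then have "t *\<^sub>R g \<in> D" using cD GD that unfolding convex_cone_iff by blast
    then have "b < a \<bullet> (t *\<^sub>R g)" using ab(2) by blast
    also have "a \<bullet> (t *\<^sub>R g) = b" unfolding t_def using neg by simp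
    finally show False by simp
  qed
  obtain a1 a2 c where a: "a = ((a1, a2), c)" by (metis prod.exhaust)
  have formula: "a \<bullet> L \<pi> s = (\<Sum>k\<in>UNIV. \<Sum>l\<in>UNIV. \<pi>$k$l * (a1$k + a2$l + c * d$k$l)) + c * s"
    if "\<forall>k l. 0 \<le> \<pi>$k$l" for \<pi> s
  proof -
    have "a \<bullet> L \<pi> s = (a1 \<bullet> rowsum \<pi> + a2 \<bullet> colsum \<pi>) + c * pairing \<pi> d + c * s"
      unfolding a L_def by (simp add: distrib_left)
    also have "a1 \<bullet> rowsum \<pi> + a2 \<bullet> colsum \<pi> = (\<Sum>k\<in>UNIV. \<Sum>l\<in>UNIV. \<pi>$k$l * (a1$k + a2$l))"
      by (rule coupling_identity[OF in_couplings_rowcol[OF that]])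
    finally show ?thesis using split_sum[of \<pi> a1 a2 c d] by linarith
  qed
  have genkl: "0 \<le> a1$k + a2$l + c * d$k$l" for k l
  proof -
    have "L (Emat k l) 0 \<in> G" unfolding G_def by (rule UnI1, rule image_eqI[of _ _ "(k,l)"]) simp_all
    from gen[OF this] have "0 \<le> a \<bullet> L (Emat k l) 0" .
    also have "a \<bullet> L (Emat k l) 0 = a1$k + a2$l + c * d$k$l"
      unfolding formula[OF Enn] Emat_sum by simp
    finally show ?thesis .
  qed
  have c0: "0 \<le> c"
  proof -
    have "L 0 1 \<in> G" unfolding G_def by blast
    from gen[OF this] show ?thesis unfolding formula[of 0 1, simplified] by simp
  qed
  define \<pi>0 where "\<pi>0 = (\<chi> k l. \<alpha>$k * \<beta>$l)"
  have pi0: "\<pi>0 \<in> couplings \<alpha> \<beta>" unfolding \<pi>0_def by (rule prod_coupling[OF \<alpha> \<beta>])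
  have pi0nn: "\<forall>k l. 0 \<le> \<pi>0$k$l" using pi0 by (auto simp: couplings_def)
  have "0 \<le> (\<Sum>k\<in>UNIV. \<Sum>l\<in>UNIV. \<pi>0$k$l * (a1$k + a2$l + c * d$k$l))"
    by (intro sum_nonneg mult_nonneg_nonneg) (auto simp: pi0nn genkl)
  also have "\<dots> = a1 \<bullet> \<alpha> + a2 \<bullet> \<beta> + c * pairing \<pi>0 d"
    unfolding coupling_identity[OF pi0, of a1 a2] split_sum ..
  finally have P0: "0 \<le> a1 \<bullet> \<alpha> + a2 \<bullet> \<beta> + c * pairing \<pi>0 d" .
  have Pp: "a1 \<bullet> \<alpha> + a2 \<bullet> \<beta> + c * (SW \<alpha> \<beta> d - \<epsilon>) < 0"
    using ab(1) b0 unfolding a p_def by (simp add: inner_prod_def)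
  have SWle: "SW \<alpha> \<beta> d \<le> pairing \<pi>0 d" by (rule SW_le[OF pi0 dnn])
  have cpos: "0 < c"
  proof (rule ccontr)
    assume "\<not> 0 < c" then have "c = 0" using c0 by simp
    then show False using P0 Pp by simp
  qed
  define u where "u = (- 1 / c) *\<^sub>R a1"
  define v where "v = (- 1 / c) *\<^sub>R a2"
  have "\<forall>k l. u$k + v$l \<le> d$k$l"
  proof (intro allI)
    fix k l
    have "u$k + v$l = - (a1$k + a2$l) / c" using cpos by (simp add: u_def v_def field_simps)
    also have "\<dots> \<le> d$k$l" using genkl[of k l] cpos by (simp add: divide_le_eq algebra_simps)
    finally show "u$k + v$l \<le> d$k$l" .
  qed
  moreover have "SW \<alpha> \<beta> d - \<epsilon> < u \<bullet> \<alpha> + v \<bullet> \<beta>"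
  proof -
    have "u \<bullet> \<alpha> + v \<bullet> \<beta> = - (a1 \<bullet> \<alpha> + a2 \<bullet> \<beta>) / c" using cpos by (simp add: u_def v_def field_simps)
    moreover have "SW \<alpha> \<beta> d - \<epsilon> < - (a1 \<bullet> \<alpha> + a2 \<bullet> \<beta>) / c"
      using Pp cpos by (simp add: less_divide_eq algebra_simps)
    ultimately show ?thesis by simp
  qed
  ultimately show ?thesis by blast
qed

lemma strong_duality:
  assumes \<alpha>: "\<alpha> \<in> prob_simplex" and \<beta>: "\<beta> \<in> prob_simplex" and dnn: "\<forall>k l. 0 \<le> d$k$l"
  shows "dual_sols \<alpha> \<beta> d \<noteq> {}" "\<And>f. f \<in> dual_sols \<alpha> \<beta> d \<Longrightarrow> dual_obj \<alpha> \<beta> d f = SW \<alpha> \<beta> d"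
proof -
  obtain fs where fs: "fs \<in> dual_box d" "\<forall>g\<in>dual_box d. dual_obj \<alpha> \<beta> d g \<le> dual_obj \<alpha> \<beta> d fs"
    using continuous_attains_sup[OF compact_dual_box _ dual_obj_cont_f] zero_in_dual_box[OF dnn] by blast
  then have fsS: "fs \<in> dual_sols \<alpha> \<beta> d" by (simp add: dual_sols_def)
  then show "dual_sols \<alpha> \<beta> d \<noteq> {}" by blast
  have ge: "SW \<alpha> \<beta> d - \<epsilon> < dual_obj \<alpha> \<beta> d fs" if eps: "0 < \<epsilon>" for \<epsilon>
  proof -
    obtain u v where uv: "\<forall>k l. u$k + v$l \<le> d$k$l" "SW \<alpha> \<beta> d - \<epsilon> < u \<bullet> \<alpha> + v \<bullet> \<beta>"
      using farkas_step[OF \<alpha> \<beta> dnn eps] by blast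
    obtain f where "f \<in> dual_box d" "u \<bullet> \<alpha> + v \<bullet> \<beta> \<le> dual_obj \<alpha> \<beta> d f"
      using dual_rep[OF \<alpha> \<beta> dnn] uv(1) by blast
    then show ?thesis using fs(2) uv(2) by force
  qed
  have "SW \<alpha> \<beta> d \<le> dual_obj \<alpha> \<beta> d fs"
    by (rule field_le_epsilon) (use ge in \<open>smt (verit)\<close>)
  then have eq: "dual_obj \<alpha> \<beta> d fs = SW \<alpha> \<beta> d" using dual_le_SW[OF \<alpha> \<beta>] by (simp add: antisym)
  fix f assume "f \<in> dual_sols \<alpha> \<beta> d"
  then have "dual_obj \<alpha> \<beta> d fs \<le> dual_obj \<alpha> \<beta> d f" using fs(1) by (auto simp: dual_sols_def)
  then show "dual_obj \<alpha> \<beta> d f = SW \<alpha> \<beta> d" using eq dual_le_SW[OF \<alpha> \<beta>, of d f] by simp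
qed



lemma norm_vec_le_sum: "norm (x::('a::real_normed_vector)^'k::finite) \<le> (\<Sum>i\<in>UNIV. norm (x$i))"
  unfolding norm_vec_def by (rule L2_set_le_sum) simp

lemma mat_norm_le: "(\<And>k l. \<bar>(x::real^'k::finite^'k)$k$l\<bar> \<le> (c::real)) \<Longrightarrow> norm x \<le> real CARD('k) * (real CARD('k) * c)"
proof -
  assume a: "\<And>k l. \<bar>x$k$l\<bar> \<le> c"
  have "norm x \<le> (\<Sum>i\<in>UNIV. norm (x$i))" by (rule norm_vec_le_sum)
  also have "\<dots> \<le> (\<Sum>i\<in>(UNIV::'k set). real CARD('k) * c)" by (rule sum_mono) (rule vec_norm_le, rule a)
  finally show ?thesis by simp
qed

lemma closed_couplings: "closed (couplings \<alpha> \<beta>)"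
  unfolding couplings_def
  by (intro closed_Collect_conj closed_Collect_all closed_Collect_le closed_Collect_eq continuous_intros)

lemma bounded_couplings: "\<alpha> \<in> prob_simplex \<Longrightarrow> bounded (couplings \<alpha> \<beta>)"
  for \<alpha> :: "real^'k::finite"
  unfolding bounded_iff
proof (intro exI[of _ "real CARD('k) * (real CARD('k) * 1)"] ballI)
  fix \<pi> assume "\<alpha> \<in> prob_simplex" "\<pi> \<in> couplings \<alpha> \<beta>"
  then have "\<And>k l. \<bar>\<pi>$k$l\<bar> \<le> 1" using coupling_le1 by (metis abs_of_nonneg)
  then show "norm \<pi> \<le> real CARD('k) * (real CARD('k) * 1)" by (rule mat_norm_le)
qed

lemma compact_couplings: "\<alpha> \<in> prob_simplex \<Longrightarrow> compact (couplings \<alpha> \<beta>)"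
  using closed_couplings bounded_couplings compact_eq_bounded_closed by blast

lemma pairing_cont: "continuous_on S (\<lambda>\<pi>. pairing \<pi> d)"
  unfolding pairing_def by (intro continuous_intros)

lemma opt_exists:
  assumes \<alpha>: "\<alpha> \<in> prob_simplex" and \<beta>: "\<beta> \<in> prob_simplex" and dnn: "\<forall>k l. 0 \<le> d$k$l"
  shows "opt_couplings \<alpha> \<beta> d \<noteq> {}"
proof -
  obtain \<pi> where \<pi>: "\<pi> \<in> couplings \<alpha> \<beta>" "\<forall>y\<in>couplings \<alpha> \<beta>. pairing \<pi> d \<le> pairing y d"
    using continuous_attains_inf[OF compact_couplings[OF \<alpha>] couplings_ne[OF \<alpha> \<beta>] pairing_cont] by blast
  have "pairing \<pi> d \<le> SW \<alpha> \<beta> d" unfolding SW_def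
    by (rule cInf_greatest) (use \<pi> couplings_ne[OF \<alpha> \<beta>] in auto)
  then have "pairing \<pi> d = SW \<alpha> \<beta> d" using SW_le[OF \<pi>(1) dnn] by simp
  then show ?thesis using \<pi>(1) unfolding opt_couplings_def by blast
qed

definition feas :: "real^'k::finite \<Rightarrow> real^'k \<Rightarrow> real^'k^'k \<Rightarrow> bool" where
  "feas \<alpha> \<beta> d \<longleftrightarrow> \<alpha> \<in> prob_simplex \<and> \<beta> \<in> prob_simplex \<and> (\<forall>k l. 0 \<le> d$k$l)"

lemma LB:
  assumes "feas \<alpha> \<beta> d" "feas \<alpha>' \<beta>' d'"
    and \<pi>': "\<pi>' \<in> opt_couplings \<alpha>' \<beta>' d'" and f: "f \<in> dual_sols \<alpha> \<beta> d"
  shows "pairing \<pi>' (d' - d) + cctrans f d \<bullet> (\<alpha>' - \<alpha>) + ctrans f d \<bullet> (\<beta>' - \<beta>)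
           \<le> SW \<alpha>' \<beta>' d' - SW \<alpha> \<beta> d"
proof -
  have a: "\<alpha> \<in> prob_simplex" "\<beta> \<in> prob_simplex" "\<forall>k l. 0 \<le> d$k$l" using assms(1) by (auto simp: feas_def)
  have c: "\<pi>' \<in> couplings \<alpha>' \<beta>'" "pairing \<pi>' d' = SW \<alpha>' \<beta>' d'" using \<pi>' by (auto simp: opt_couplings_def)
  have 1: "SW \<alpha> \<beta> d = cctrans f d \<bullet> \<alpha> + ctrans f d \<bullet> \<beta>"
    using strong_duality(2)[OF a f] by (simp add: dual_obj_def)
  have 2: "cctrans f d \<bullet> \<alpha>' + ctrans f d \<bullet> \<beta>' \<le> pairing \<pi>' d"
    using weak_duality[OF c(1), of d f] by (simp add: dual_obj_def)
  have 3: "pairing \<pi>' d' = pairing \<pi>' d + pairing \<pi>' (d' - d)"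
    using pairing_diff[of \<pi>' d' d] by simp
  show ?thesis using 1 2 3 c(2) by (simp add: inner_diff_right)
qed

lemma UB:
  assumes "feas \<alpha> \<beta> d" "feas \<alpha>' \<beta>' d'"
    and \<pi>: "\<pi> \<in> opt_couplings \<alpha> \<beta> d" and f': "f' \<in> dual_sols \<alpha>' \<beta>' d'"
  shows "SW \<alpha>' \<beta>' d' - SW \<alpha> \<beta> d
           \<le> pairing \<pi> (d' - d) + cctrans f' d' \<bullet> (\<alpha>' - \<alpha>) + ctrans f' d' \<bullet> (\<beta>' - \<beta>)"
proof -
  have a: "\<alpha>' \<in> prob_simplex" "\<beta>' \<in> prob_simplex" "\<forall>k l. 0 \<le> d'$k$l" using assms(2) by (auto simp: feas_def)
  have c: "\<pi> \<in> couplings \<alpha> \<beta>" "pairing \<pi> d = SW \<alpha> \<beta> d" using \<pi> by (auto simp: opt_couplings_def)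
  have 1: "SW \<alpha>' \<beta>' d' = cctrans f' d' \<bullet> \<alpha>' + ctrans f' d' \<bullet> \<beta>'"
    using strong_duality(2)[OF a f'] by (simp add: dual_obj_def)
  have 2: "cctrans f' d' \<bullet> \<alpha> + ctrans f' d' \<bullet> \<beta> \<le> pairing \<pi> d'"
    using weak_duality[OF c(1), of d' f'] by (simp add: dual_obj_def)
  have 3: "pairing \<pi> d' = pairing \<pi> d + pairing \<pi> (d' - d)"
    using pairing_diff[of \<pi> d' d] by simp
  show ?thesis using 1 2 3 c(2) by (simp add: inner_diff_right)
qed

definition Cst :: "real^'k::finite^'k \<Rightarrow> real" where
  "Cst d = real CARD('k) * (2 * (real CARD('k) * \<bar>Bx d\<bar> + norm d))"

lemma box_norm: "f \<in> dual_box d \<Longrightarrow> norm f \<le> real CARD('k) * \<bar>Bx d\<bar>"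
  for f :: "real^'k::finite"
proof -
  assume "f \<in> dual_box d"
  then have "\<And>i. \<bar>f$i\<bar> \<le> Bx d" by (simp add: dual_box_eq)
  then have "\<And>i. \<bar>f$i\<bar> \<le> \<bar>Bx d\<bar>" by (meson abs_ge_self order_trans)
  then show ?thesis by (rule vec_norm_le)
qed

lemma ctrans_norm_box: "f \<in> dual_box d \<Longrightarrow> norm (ctrans f d) \<le> Cst d"
  and cctrans_norm_box: "f \<in> dual_box d \<Longrightarrow> norm (cctrans f d) \<le> Cst d"
  for f :: "real^'k::finite"
proof -
  assume f: "f \<in> dual_box d"
  have "real CARD('k) * (2 * (norm f + norm d)) \<le> Cst d"
    unfolding Cst_def using box_norm[OF f] by (intro mult_left_mono) auto
  then show "norm (ctrans f d) \<le> Cst d" "norm (cctrans f d) \<le> Cst d"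
    using ctrans_norm[of f d] cctrans_norm[of f d] by linarith+
qed

lemma dual_sols_box: "f \<in> dual_sols \<alpha> \<beta> d \<Longrightarrow> f \<in> dual_box d"
  by (simp add: dual_sols_def)

lemma opt_coupling: "\<pi> \<in> opt_couplings \<alpha> \<beta> d \<Longrightarrow> \<pi> \<in> couplings \<alpha> \<beta>"
  by (simp add: opt_couplings_def)

lemma SW_diff_bound:
  assumes "feas \<alpha> \<beta> d" "feas \<alpha>' \<beta>' d'"
  shows "\<bar>SW \<alpha>' \<beta>' d' - SW \<alpha> \<beta> d\<bar> \<le> norm (d' - d) + max (Cst d) (Cst d') * (norm (\<alpha>' - \<alpha>) + norm (\<beta>' - \<beta>))"
proof -
  have a: "\<alpha> \<in> prob_simplex" "\<beta> \<in> prob_simplex" "\<forall>k l. 0 \<le> d$k$l" using assms(1) by (auto simp: feas_def)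
  have a': "\<alpha>' \<in> prob_simplex" "\<beta>' \<in> prob_simplex" "\<forall>k l. 0 \<le> d'$k$l" using assms(2) by (auto simp: feas_def)
  obtain \<pi> where \<pi>: "\<pi> \<in> opt_couplings \<alpha> \<beta> d" using opt_exists[OF a] by blast
  obtain \<pi>' where \<pi>': "\<pi>' \<in> opt_couplings \<alpha>' \<beta>' d'" using opt_exists[OF a'] by blast
  obtain f where f: "f \<in> dual_sols \<alpha> \<beta> d" using strong_duality(1)[OF a] by blast
  obtain f' where f': "f' \<in> dual_sols \<alpha>' \<beta>' d'" using strong_duality(1)[OF a'] by blast
  define M where "M = max (Cst d) (Cst d')"
  have n1: "\<bar>pairing \<pi>' (d' - d)\<bar> \<le> norm (d' - d)" by (rule pairing_bound[OF opt_coupling[OF \<pi>'] a'(1)])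
  have n2: "\<bar>pairing \<pi> (d' - d)\<bar> \<le> norm (d' - d)" by (rule pairing_bound[OF opt_coupling[OF \<pi>] a(1)])
  have ip: "\<bar>x \<bullet> y\<bar> \<le> M * norm y" if "norm x \<le> M" for x y :: "real^'k"
    using Cauchy_Schwarz_ineq2[of x y] that by (meson mult_right_mono norm_ge_zero order_trans)
  have Md: "Cst d \<le> M" "Cst d' \<le> M" unfolding M_def by auto
  have i1: "\<bar>cctrans f d \<bullet> (\<alpha>' - \<alpha>)\<bar> \<le> M * norm (\<alpha>' - \<alpha>)"
    by (rule ip, rule order_trans[OF cctrans_norm_box[OF dual_sols_box[OF f]] Md(1)])
  have i2: "\<bar>ctrans f d \<bullet> (\<beta>' - \<beta>)\<bar> \<le> M * norm (\<beta>' - \<beta>)"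
    by (rule ip, rule order_trans[OF ctrans_norm_box[OF dual_sols_box[OF f]] Md(1)])
  have i3: "\<bar>cctrans f' d' \<bullet> (\<alpha>' - \<alpha>)\<bar> \<le> M * norm (\<alpha>' - \<alpha>)"
    by (rule ip, rule order_trans[OF cctrans_norm_box[OF dual_sols_box[OF f']] Md(2)])
  have i4: "\<bar>ctrans f' d' \<bullet> (\<beta>' - \<beta>)\<bar> \<le> M * norm (\<beta>' - \<beta>)"
    by (rule ip, rule order_trans[OF ctrans_norm_box[OF dual_sols_box[OF f']] Md(2)])
  have u: "SW \<alpha>' \<beta>' d' - SW \<alpha> \<beta> d \<le> norm (d' - d) + M * norm (\<alpha>' - \<alpha>) + M * norm (\<beta>' - \<beta>)"
    using UB[OF assms \<pi> f'] n2 i3 i4 unfolding abs_le_iff by linarith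
  have l: "- (norm (d' - d) + M * norm (\<alpha>' - \<alpha>) + M * norm (\<beta>' - \<beta>)) \<le> SW \<alpha>' \<beta>' d' - SW \<alpha> \<beta> d"
    using LB[OF assms \<pi>' f] n1 i1 i2 unfolding abs_le_iff by linarith
  show ?thesis using u l unfolding M_def[symmetric] distrib_left abs_le_iff by linarith
qed



lemma Inf_image_lip:
  fixes F G :: "'a \<Rightarrow> real"
  assumes "A \<noteq> {}" "bdd_below (F ` A)" "bdd_below (G ` A)" "\<And>a. a \<in> A \<Longrightarrow> \<bar>F a - G a\<bar> \<le> L"
  shows "\<bar>Inf (F ` A) - Inf (G ` A)\<bar> \<le> L"
proof -
  have 1: "Inf (G ` A) - L \<le> Inf (F ` A)"
  proof (rule cInf_greatest)
    show "F ` A \<noteq> {}" using assms(1) by simp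
    fix y assume "y \<in> F ` A"
    then obtain a where a: "a \<in> A" "y = F a" by blast
    have "Inf (G ` A) \<le> G a" by (rule cInf_lower) (use a assms(3) in auto)
    then show "Inf (G ` A) - L \<le> y" using assms(4)[OF a(1)] a(2) by (simp add: abs_le_iff)
  qed
  have 2: "Inf (F ` A) - L \<le> Inf (G ` A)"
  proof (rule cInf_greatest)
    show "G ` A \<noteq> {}" using assms(1) by simp
    fix y assume "y \<in> G ` A"
    then obtain a where a: "a \<in> A" "y = G a" by blast
    have "Inf (F ` A) \<le> F a" by (rule cInf_lower) (use a assms(2) in auto)
    then show "Inf (F ` A) - L \<le> y" using assms(4)[OF a(1)] a(2) by (simp add: abs_le_iff)
  qed
  show ?thesis using 1 2 by (simp add: abs_le_iff)
qed

lemma Sup_image_lip: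
  fixes F G :: "'a \<Rightarrow> real"
  assumes "A \<noteq> {}" "bdd_above (F ` A)" "bdd_above (G ` A)" "\<And>a. a \<in> A \<Longrightarrow> \<bar>F a - G a\<bar> \<le> L"
  shows "\<bar>Sup (F ` A) - Sup (G ` A)\<bar> \<le> L"
proof -
  have 1: "Sup (F ` A) \<le> Sup (G ` A) + L"
  proof (rule cSup_least)
    show "F ` A \<noteq> {}" using assms(1) by simp
    fix y assume "y \<in> F ` A"
    then obtain a where a: "a \<in> A" "y = F a" by blast
    have "G a \<le> Sup (G ` A)" by (rule cSup_upper) (use a assms(3) in auto)
    then show "y \<le> Sup (G ` A) + L" using assms(4)[OF a(1)] a(2) by (simp add: abs_le_iff)
  qed
  have 2: "Sup (G ` A) \<le> Sup (F ` A) + L"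
  proof (rule cSup_least)
    show "G ` A \<noteq> {}" using assms(1) by simp
    fix y assume "y \<in> G ` A"
    then obtain a where a: "a \<in> A" "y = G a" by blast
    have "F a \<le> Sup (F ` A)" by (rule cSup_upper) (use a assms(2) in auto)
    then show "y \<le> Sup (F ` A) + L" using assms(4)[OF a(1)] a(2) by (simp add: abs_le_iff)
  qed
  show ?thesis using 1 2 by (simp add: abs_le_iff)
qed

definition Pd :: "real^'k::finite \<Rightarrow> real^'k \<Rightarrow> real^'k^'k \<Rightarrow> real^'k^'k \<Rightarrow> real" where
  "Pd \<alpha> \<beta> d z = Inf ((\<lambda>\<pi>. pairing \<pi> z) ` opt_couplings \<alpha> \<beta> d)"

definition Qd :: "real^'k::finite \<Rightarrow> real^'k \<Rightarrow> real^'k^'k \<Rightarrow> real^'k \<Rightarrow> real^'k \<Rightarrow> real" where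
  "Qd \<alpha> \<beta> d x y = Sup ((\<lambda>f. cctrans f d \<bullet> x + ctrans f d \<bullet> y) ` dual_sols \<alpha> \<beta> d)"

definition Dl :: "real^'k::finite \<Rightarrow> real^'k \<Rightarrow> real^'k^'k \<Rightarrow> ((real^'k) \<times> (real^'k) \<times> (real^'k^'k)) \<Rightarrow> real" where
  "Dl \<alpha> \<beta> d x = Pd \<alpha> \<beta> d (snd (snd x)) + Qd \<alpha> \<beta> d (fst x) (fst (snd x))"

lemma Pd_bdd:
  assumes "\<alpha> \<in> prob_simplex"
  shows "bdd_below ((\<lambda>\<pi>. pairing \<pi> z) ` opt_couplings \<alpha> \<beta> d)"
proof (rule bdd_belowI)
  fix t assume "t \<in> (\<lambda>\<pi>. pairing \<pi> z) ` opt_couplings \<alpha> \<beta> d"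
  then obtain \<pi> where "\<pi> \<in> opt_couplings \<alpha> \<beta> d" "t = pairing \<pi> z" by blast
  then show "- norm z \<le> t" using pairing_bound[OF opt_coupling assms, of \<pi> \<beta> d z] by (simp add: abs_le_iff)
qed

lemma Pd_le: "\<alpha> \<in> prob_simplex \<Longrightarrow> \<pi> \<in> opt_couplings \<alpha> \<beta> d \<Longrightarrow> Pd \<alpha> \<beta> d z \<le> pairing \<pi> z"
  unfolding Pd_def by (rule cInf_lower) (auto intro: Pd_bdd)

lemma dterm_bound:
  assumes "f \<in> dual_box d"
  shows "\<bar>cctrans f d \<bullet> x + ctrans f d \<bullet> y\<bar> \<le> Cst d * (norm x + norm y)"
proof -
  have "\<bar>cctrans f d \<bullet> x\<bar> \<le> Cst d * norm x"
    using Cauchy_Schwarz_ineq2[of "cctrans f d" x] cctrans_norm_box[OF assms]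
    by (meson mult_right_mono norm_ge_zero order_trans)
  moreover have "\<bar>ctrans f d \<bullet> y\<bar> \<le> Cst d * norm y"
    using Cauchy_Schwarz_ineq2[of "ctrans f d" y] ctrans_norm_box[OF assms]
    by (meson mult_right_mono norm_ge_zero order_trans)
  ultimately show ?thesis by (simp add: distrib_left abs_le_iff)
qed

lemma Qd_bdd: "bdd_above ((\<lambda>f. cctrans f d \<bullet> x + ctrans f d \<bullet> y) ` dual_sols \<alpha> \<beta> d)"
proof (rule bdd_aboveI)
  fix t assume "t \<in> (\<lambda>f. cctrans f d \<bullet> x + ctrans f d \<bullet> y) ` dual_sols \<alpha> \<beta> d"
  then obtain f where "f \<in> dual_sols \<alpha> \<beta> d" "t = cctrans f d \<bullet> x + ctrans f d \<bullet> y" by blast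
  then show "t \<le> Cst d * (norm x + norm y)" using dterm_bound[OF dual_sols_box, of f \<alpha> \<beta> d x y] by (simp add: abs_le_iff)
qed

lemma Qd_ge: "f \<in> dual_sols \<alpha> \<beta> d \<Longrightarrow> cctrans f d \<bullet> x + ctrans f d \<bullet> y \<le> Qd \<alpha> \<beta> d x y"
  unfolding Qd_def by (rule cSup_upper) (auto intro: Qd_bdd)

lemma Pd_lip:
  assumes "feas \<alpha> \<beta> d"
  shows "\<bar>Pd \<alpha> \<beta> d z - Pd \<alpha> \<beta> d z'\<bar> \<le> norm (z - z')"
  unfolding Pd_def
proof (rule Inf_image_lip)
  have a: "\<alpha> \<in> prob_simplex" "\<beta> \<in> prob_simplex" "\<forall>k l. 0 \<le> d$k$l" using assms by (auto simp: feas_def)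
  show "opt_couplings \<alpha> \<beta> d \<noteq> {}" by (rule opt_exists[OF a])
  show "bdd_below ((\<lambda>\<pi>. pairing \<pi> z) ` opt_couplings \<alpha> \<beta> d)" by (rule Pd_bdd[OF a(1)])
  show "bdd_below ((\<lambda>\<pi>. pairing \<pi> z') ` opt_couplings \<alpha> \<beta> d)" by (rule Pd_bdd[OF a(1)])
  fix \<pi> assume "\<pi> \<in> opt_couplings \<alpha> \<beta> d"
  then show "\<bar>pairing \<pi> z - pairing \<pi> z'\<bar> \<le> norm (z - z')"
    unfolding pairing_diff by (rule pairing_bound[OF opt_coupling a(1)])
qed

lemma Qd_lip:
  assumes "feas \<alpha> \<beta> d"
  shows "\<bar>Qd \<alpha> \<beta> d x y - Qd \<alpha> \<beta> d x' y'\<bar> \<le> Cst d * (norm (x - x') + norm (y - y'))"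
  unfolding Qd_def
proof (rule Sup_image_lip)
  have a: "\<alpha> \<in> prob_simplex" "\<beta> \<in> prob_simplex" "\<forall>k l. 0 \<le> d$k$l" using assms by (auto simp: feas_def)
  show "dual_sols \<alpha> \<beta> d \<noteq> {}" by (rule strong_duality(1)[OF a])
  fix f assume "f \<in> dual_sols \<alpha> \<beta> d"
  then have "\<bar>cctrans f d \<bullet> (x - x') + ctrans f d \<bullet> (y - y')\<bar> \<le> Cst d * (norm (x - x') + norm (y - y'))"
    by (rule dterm_bound[OF dual_sols_box])
  then show "\<bar>cctrans f d \<bullet> x + ctrans f d \<bullet> y - (cctrans f d \<bullet> x' + ctrans f d \<bullet> y')\<bar> \<le> Cst d * (norm (x - x') + norm (y - y'))"
    by (simp add: inner_diff_right algebra_simps)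
qed (rule Qd_bdd)+

lemma Cst_nonneg: "0 \<le> Cst d"
  unfolding Cst_def by simp

lemma Dl_lip:
  assumes "feas \<alpha> \<beta> d"
  shows "\<bar>Dl \<alpha> \<beta> d x - Dl \<alpha> \<beta> d x'\<bar> \<le> (1 + 2 * Cst d) * dist x x'"
proof -
  obtain x1 x2 x3 where x: "x = (x1, x2, x3)" by (cases x) auto
  obtain y1 y2 y3 where y: "x' = (y1, y2, y3)" by (cases x') auto
  have xy: "dist x x' = norm (x1 - y1, x2 - y2, x3 - y3)" unfolding x y dist_norm by simp
  have n1: "norm (x1 - y1) \<le> dist x x'" unfolding xy by (rule norm_fst_le)
  have n2: "norm (x2 - y2) \<le> dist x x'" unfolding xy
    by (rule order_trans[OF norm_fst_le norm_snd_le])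
  have n3: "norm (x3 - y3) \<le> dist x x'" unfolding xy
    by (rule order_trans[OF norm_snd_le norm_snd_le])
  have 1: "\<bar>Pd \<alpha> \<beta> d x3 - Pd \<alpha> \<beta> d y3\<bar> \<le> norm (x3 - y3)" by (rule Pd_lip[OF assms])
  have 2: "\<bar>Qd \<alpha> \<beta> d x1 x2 - Qd \<alpha> \<beta> d y1 y2\<bar> \<le> Cst d * (norm (x1 - y1) + norm (x2 - y2))"
    by (rule Qd_lip[OF assms])
  have 3: "Cst d * (norm (x1 - y1) + norm (x2 - y2)) \<le> Cst d * (2 * dist x x')"
    using n1 n2 Cst_nonneg[of d] by (intro mult_left_mono) auto
  have e: "Dl \<alpha> \<beta> d x - Dl \<alpha> \<beta> d x' = (Pd \<alpha> \<beta> d x3 - Pd \<alpha> \<beta> d y3) + (Qd \<alpha> \<beta> d x1 x2 - Qd \<alpha> \<beta> d y1 y2)"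
    unfolding Dl_def x y by simp
  have "\<bar>Dl \<alpha> \<beta> d x - Dl \<alpha> \<beta> d x'\<bar> \<le> \<bar>Pd \<alpha> \<beta> d x3 - Pd \<alpha> \<beta> d y3\<bar> + \<bar>Qd \<alpha> \<beta> d x1 x2 - Qd \<alpha> \<beta> d y1 y2\<bar>"
    unfolding e by (rule abs_triangle_ineq)
  also have "\<dots> \<le> dist x x' + Cst d * (2 * dist x x')" using 1 2 3 n3 by linarith
  also have "\<dots> = (1 + 2 * Cst d) * dist x x'" by (simp add: algebra_simps)
  finally show ?thesis .
qed

lemma Dl_cont: "feas \<alpha> \<beta> d \<Longrightarrow> continuous_on S (Dl \<alpha> \<beta> d)"
  by (rule lip_cont, rule Dl_lip)

lemma Mx_cont: "continuous_on S Mx"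
  by (rule lip_cont[of _ 1]) (simp add: dist_norm Mx_lip)

lemma Cst_lip: "\<bar>Cst d - Cst e\<bar> \<le> (real CARD('k) * (2 * (real CARD('k) * 4 + 1))) * norm (d - e)"
  for d :: "real^'k::finite^'k"
proof -
  define n where "n = norm (d - e)"
  define K where "K = real CARD('k)"
  have K0: "0 \<le> K" unfolding K_def by simp
  have b0: "\<bar>Bx d - Bx e\<bar> \<le> 4 * n" unfolding n_def using Mx_lip[of d e] by (simp add: abs_le_iff)
  have b: "\<bar>\<bar>Bx d\<bar> - \<bar>Bx e\<bar>\<bar> \<le> 4 * n" by (rule order_trans[OF abs_triangle_ineq3 b0])
  have A: "\<bar>K * (\<bar>Bx d\<bar> - \<bar>Bx e\<bar>)\<bar> \<le> K * (4 * n)"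
    using mult_left_mono[OF b K0] by (simp only: abs_mult abs_of_nonneg[OF K0])
  have B: "\<bar>norm d - norm e\<bar> \<le> n" unfolding n_def by (rule norm_triangle_ineq3)
  have C: "Cst d - Cst e = K * 2 * (K * (\<bar>Bx d\<bar> - \<bar>Bx e\<bar>) + (norm d - norm e))"
    unfolding Cst_def K_def by (simp add: algebra_simps)
  have "\<bar>K * (\<bar>Bx d\<bar> - \<bar>Bx e\<bar>) + (norm d - norm e)\<bar> \<le> K * (4 * n) + n"
    using A B abs_triangle_ineq[of "K * (\<bar>Bx d\<bar> - \<bar>Bx e\<bar>)" "norm d - norm e"] by linarith
  then have "\<bar>Cst d - Cst e\<bar> \<le> K * 2 * (K * (4 * n) + n)"
    unfolding C abs_mult using K0 by (simp add: mult_left_mono)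
  also have "\<dots> = (K * (2 * (K * 4 + 1))) * n" by (simp add: algebra_simps)
  finally show ?thesis unfolding K_def n_def .
qed

lemma Cst_cont: "continuous_on S (Cst :: real^'k::finite^'k \<Rightarrow> real)"
  by (rule lip_cont[of _ "real CARD('k) * (2 * (real CARD('k) * 4 + 1))"]) (metis Cst_lip dist_norm)



lemma squeeze0:
  fixes u v :: "nat \<Rightarrow> real"
  assumes "\<And>j. \<bar>u j - c\<bar> \<le> v j" "v \<longlonglongrightarrow> 0"
  shows "u \<longlonglongrightarrow> c"
proof (rule tendsto_sandwich[of "\<lambda>j. c - v j" _ _ "\<lambda>j. c + v j"])
  have h: "c - v j \<le> u j" "u j \<le> c + v j" for j using assms(1)[of j] by (auto simp: abs_le_iff)
  show "\<forall>\<^sub>F n in sequentially. c - v n \<le> u n" by (rule always_eventually) (simp add: h)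
  show "\<forall>\<^sub>F n in sequentially. u n \<le> c + v n" by (rule always_eventually) (simp add: h)
  show "(\<lambda>j. c - v j) \<longlonglongrightarrow> c" using tendsto_diff[OF tendsto_const assms(2), of c] by simp
  show "(\<lambda>j. c + v j) \<longlonglongrightarrow> c" using tendsto_add[OF tendsto_const assms(2), of c] by simp
qed

lemma pairing_scale2: "pairing \<pi> (c *\<^sub>R z) = c * pairing \<pi> z"
  by (simp add: pairing_def sum_distrib_left mult.left_commute)

definition shft :: "real^'k::finite \<Rightarrow> real^'k \<Rightarrow> real^'k^'k \<Rightarrow> real \<Rightarrow> ((real^'k) \<times> (real^'k) \<times> (real^'k^'k))
    \<Rightarrow> (real^'k) \<times> (real^'k) \<times> (real^'k^'k)" where
  "shft \<alpha> \<beta> d A x = (\<alpha> + (1/A) *\<^sub>R fst x, \<beta> + (1/A) *\<^sub>R fst (snd x), d + (1/A) *\<^sub>R snd (snd x))"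

definition feasT :: "(real^'k::finite) \<times> (real^'k) \<times> (real^'k^'k) \<Rightarrow> bool" where
  "feasT y \<longleftrightarrow> feas (fst y) (fst (snd y)) (snd (snd y))"

definition SWT :: "(real^'k::finite) \<times> (real^'k) \<times> (real^'k^'k) \<Rightarrow> real" where
  "SWT y = SW (fst y) (fst (snd y)) (snd (snd y))"

definition gfun :: "real^'k::finite \<Rightarrow> real^'k \<Rightarrow> real^'k^'k \<Rightarrow> real \<Rightarrow> ((real^'k) \<times> (real^'k) \<times> (real^'k^'k)) \<Rightarrow> real" where
  "gfun \<alpha> \<beta> d A x = A * (SWT (shft \<alpha> \<beta> d A x) - SW \<alpha> \<beta> d)"

lemma LBs:
  assumes "feas \<alpha> \<beta> d" "feasT (shft \<alpha> \<beta> d A (x1, x2, x3))" "0 < A"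
    and "\<pi>' \<in> opt_couplings (\<alpha> + (1/A) *\<^sub>R x1) (\<beta> + (1/A) *\<^sub>R x2) (d + (1/A) *\<^sub>R x3)"
    and "f \<in> dual_sols \<alpha> \<beta> d"
  shows "pairing \<pi>' x3 + (cctrans f d \<bullet> x1 + ctrans f d \<bullet> x2) \<le> gfun \<alpha> \<beta> d A (x1, x2, x3)"
proof -
  have fe: "feas (\<alpha> + (1/A) *\<^sub>R x1) (\<beta> + (1/A) *\<^sub>R x2) (d + (1/A) *\<^sub>R x3)"
    using assms(2) by (simp add: feasT_def shft_def)
  have "(1/A) * (pairing \<pi>' x3 + (cctrans f d \<bullet> x1 + ctrans f d \<bullet> x2))
      \<le> SWT (shft \<alpha> \<beta> d A (x1, x2, x3)) - SW \<alpha> \<beta> d"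
    using LB[OF assms(1) fe assms(4,5)] by (simp add: SWT_def shft_def pairing_scale2 distrib_left)
  then show ?thesis unfolding gfun_def using \<open>0 < A\<close> by (simp add: field_simps)
qed

lemma UBs:
  assumes "feas \<alpha> \<beta> d" "feasT (shft \<alpha> \<beta> d A (x1, x2, x3))" "0 < A"
    and "\<pi> \<in> opt_couplings \<alpha> \<beta> d"
    and "f' \<in> dual_sols (\<alpha> + (1/A) *\<^sub>R x1) (\<beta> + (1/A) *\<^sub>R x2) (d + (1/A) *\<^sub>R x3)"
  shows "gfun \<alpha> \<beta> d A (x1, x2, x3) \<le> pairing \<pi> x3 + (cctrans f' (d + (1/A) *\<^sub>R x3) \<bullet> x1 + ctrans f' (d + (1/A) *\<^sub>R x3) \<bullet> x2)"
proof -
  have fe: "feas (\<alpha> + (1/A) *\<^sub>R x1) (\<beta> + (1/A) *\<^sub>R x2) (d + (1/A) *\<^sub>R x3)"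
    using assms(2) by (simp add: feasT_def shft_def)
  have "SWT (shft \<alpha> \<beta> d A (x1, x2, x3)) - SW \<alpha> \<beta> d
      \<le> (1/A) * (pairing \<pi> x3 + (cctrans f' (d + (1/A) *\<^sub>R x3) \<bullet> x1 + ctrans f' (d + (1/A) *\<^sub>R x3) \<bullet> x2))"
    using UB[OF assms(1) fe assms(4,5)] by (simp add: SWT_def shft_def pairing_scale2 distrib_left)
  then show ?thesis unfolding gfun_def using \<open>0 < A\<close> by (simp add: field_simps)
qed

lemma err_lower:
  assumes fe: "feas \<alpha> \<beta> d" "feasT (shft \<alpha> \<beta> d A (x1, x2, x3))" "0 < A"
    and \<pi>': "\<pi>' \<in> opt_couplings (\<alpha> + (1/A) *\<^sub>R x1) (\<beta> + (1/A) *\<^sub>R x2) (d + (1/A) *\<^sub>R x3)"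
    and \<pi>s: "\<pi>s \<in> opt_couplings \<alpha> \<beta> d"
  shows "pairing \<pi>' x3 - pairing \<pi>s x3 \<le> gfun \<alpha> \<beta> d A (x1, x2, x3) - Dl \<alpha> \<beta> d (x1, x2, x3)"
proof -
  have a: "\<alpha> \<in> prob_simplex" "\<beta> \<in> prob_simplex" "\<forall>k l. 0 \<le> d$k$l" using fe(1) by (auto simp: feas_def)
  have "Qd \<alpha> \<beta> d x1 x2 \<le> gfun \<alpha> \<beta> d A (x1, x2, x3) - pairing \<pi>' x3"
    unfolding Qd_def
  proof (rule cSup_least)
    show "(\<lambda>f. cctrans f d \<bullet> x1 + ctrans f d \<bullet> x2) ` dual_sols \<alpha> \<beta> d \<noteq> {}"
      using strong_duality(1)[OF a] by simp
    fix t assume "t \<in> (\<lambda>f. cctrans f d \<bullet> x1 + ctrans f d \<bullet> x2) ` dual_sols \<alpha> \<beta> d"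
    then obtain f where "f \<in> dual_sols \<alpha> \<beta> d" "t = cctrans f d \<bullet> x1 + ctrans f d \<bullet> x2" by blast
    then show "t \<le> gfun \<alpha> \<beta> d A (x1, x2, x3) - pairing \<pi>' x3" using LBs[OF fe \<pi>'] by force
  qed
  moreover have "Pd \<alpha> \<beta> d x3 \<le> pairing \<pi>s x3" by (rule Pd_le[OF a(1) \<pi>s])
  ultimately show ?thesis unfolding Dl_def by simp
qed

lemma err_upper:
  assumes fe: "feas \<alpha> \<beta> d" "feasT (shft \<alpha> \<beta> d A (x1, x2, x3))" "0 < A"
    and f': "f' \<in> dual_sols (\<alpha> + (1/A) *\<^sub>R x1) (\<beta> + (1/A) *\<^sub>R x2) (d + (1/A) *\<^sub>R x3)"
    and fs: "fs \<in> dual_sols \<alpha> \<beta> d"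
  shows "gfun \<alpha> \<beta> d A (x1, x2, x3) - Dl \<alpha> \<beta> d (x1, x2, x3)
     \<le> (cctrans f' (d + (1/A) *\<^sub>R x3) \<bullet> x1 + ctrans f' (d + (1/A) *\<^sub>R x3) \<bullet> x2) - (cctrans fs d \<bullet> x1 + ctrans fs d \<bullet> x2)"
proof -
  have a: "\<alpha> \<in> prob_simplex" "\<beta> \<in> prob_simplex" "\<forall>k l. 0 \<le> d$k$l" using fe(1) by (auto simp: feas_def)
  define T where "T = cctrans f' (d + (1/A) *\<^sub>R x3) \<bullet> x1 + ctrans f' (d + (1/A) *\<^sub>R x3) \<bullet> x2"
  have "gfun \<alpha> \<beta> d A (x1, x2, x3) - T \<le> Pd \<alpha> \<beta> d x3"
    unfolding Pd_def
  proof (rule cInf_greatest)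
    show "(\<lambda>\<pi>. pairing \<pi> x3) ` opt_couplings \<alpha> \<beta> d \<noteq> {}" using opt_exists[OF a] by simp
    fix t assume "t \<in> (\<lambda>\<pi>. pairing \<pi> x3) ` opt_couplings \<alpha> \<beta> d"
    then obtain \<pi> where "\<pi> \<in> opt_couplings \<alpha> \<beta> d" "t = pairing \<pi> x3" by blast
    then show "gfun \<alpha> \<beta> d A (x1, x2, x3) - T \<le> t" using UBs[OF fe _ f'] unfolding T_def by force
  qed
  moreover have "cctrans fs d \<bullet> x1 + ctrans fs d \<bullet> x2 \<le> Qd \<alpha> \<beta> d x1 x2" by (rule Qd_ge[OF fs])
  ultimately show ?thesis unfolding Dl_def T_def by simp
qed



lemma lim_cctrans:
  assumes "F \<longlonglongrightarrow> f" "D \<longlonglongrightarrow> d"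
  shows "(\<lambda>j. cctrans (F j) (D j)) \<longlonglongrightarrow> cctrans f d"
proof (rule vec_tendstoI)
  fix k
  have v: "(\<lambda>j. 2 * (norm (F j - f) + norm (D j - d))) \<longlonglongrightarrow> 0"
    using tendsto_mult[OF tendsto_const tendsto_add[OF tendsto_norm_zero[OF LIM_zero[OF assms(1)]]
          tendsto_norm_zero[OF LIM_zero[OF assms(2)]]], of 2] by simp
  show "(\<lambda>j. cctrans (F j) (D j) $ k) \<longlonglongrightarrow> cctrans f d $ k"
    by (rule squeeze0[OF cctrans_lip v])
qed

lemma lim_ctrans:
  assumes "F \<longlonglongrightarrow> f" "D \<longlonglongrightarrow> d"
  shows "(\<lambda>j. ctrans (F j) (D j)) \<longlonglongrightarrow> ctrans f d"
proof (rule vec_tendstoI)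
  fix k
  have v: "(\<lambda>j. norm (F j - f) + norm (D j - d)) \<longlonglongrightarrow> 0"
    using tendsto_add[OF tendsto_norm_zero[OF LIM_zero[OF assms(1)]]
          tendsto_norm_zero[OF LIM_zero[OF assms(2)]]] by simp
  show "(\<lambda>j. ctrans (F j) (D j) $ k) \<longlonglongrightarrow> ctrans f d $ k"
    by (rule squeeze0[OF ctrans_lip v])
qed

lemma lim_Mx: "D \<longlonglongrightarrow> d \<Longrightarrow> (\<lambda>j. Mx (D j)) \<longlonglongrightarrow> Mx d"
  by (rule continuous_on_tendsto_compose[OF Mx_cont[of UNIV]]) auto

lemma lim_Cst: "D \<longlonglongrightarrow> d \<Longrightarrow> (\<lambda>j. Cst (D j)) \<longlonglongrightarrow> Cst d"
  by (rule continuous_on_tendsto_compose[OF Cst_cont[of UNIV]]) auto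

lemma lim_shift: "(\<lambda>j. inverse (A j)) \<longlonglongrightarrow> 0 \<Longrightarrow> X \<longlonglongrightarrow> x \<Longrightarrow> (\<lambda>j. c + (1 / A j) *\<^sub>R X j) \<longlonglongrightarrow> c"
  for c :: "'a::real_normed_vector"
proof -
  assume a: "(\<lambda>j. inverse (A j)) \<longlonglongrightarrow> 0" "X \<longlonglongrightarrow> x"
  have "(\<lambda>j. inverse (A j) *\<^sub>R X j) \<longlonglongrightarrow> 0 *\<^sub>R x" by (rule tendsto_scaleR[OF a])
  then have "(\<lambda>j. c + inverse (A j) *\<^sub>R X j) \<longlonglongrightarrow> c + 0 *\<^sub>R x" by (rule tendsto_add[OF tendsto_const])
  then show ?thesis by (simp add: divide_inverse)
qed



lemma unif_approx:
  fixes \<alpha> \<beta> :: "real^'k::finite" and d :: "real^'k^'k" and a :: "nat \<Rightarrow> real"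
  assumes fe: "feas \<alpha> \<beta> d" and apos: "\<And>n. 0 < a n" and alim: "filterlim a at_top sequentially"
    and eps: "0 < \<epsilon>"
  shows "eventually (\<lambda>n. \<forall>x. norm x \<le> R \<longrightarrow> feasT (shft \<alpha> \<beta> d (a n) x) \<longrightarrow>
            \<bar>gfun \<alpha> \<beta> d (a n) x - Dl \<alpha> \<beta> d x\<bar> < \<epsilon>) sequentially"
proof (rule ccontr)
  have a0: "\<alpha> \<in> prob_simplex" "\<beta> \<in> prob_simplex" "\<forall>k l. 0 \<le> d$k$l" using fe by (auto simp: feas_def)
  define P where "P n \<longleftrightarrow> (\<forall>x. norm x \<le> R \<longrightarrow> feasT (shft \<alpha> \<beta> d (a n) x) \<longrightarrow>
            \<bar>gfun \<alpha> \<beta> d (a n) x - Dl \<alpha> \<beta> d x\<bar> < \<epsilon>)" for n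
  assume "\<not> eventually (\<lambda>n. \<forall>x. norm x \<le> R \<longrightarrow> feasT (shft \<alpha> \<beta> d (a n) x) \<longrightarrow>
            \<bar>gfun \<alpha> \<beta> d (a n) x - Dl \<alpha> \<beta> d x\<bar> < \<epsilon>) sequentially"
  then have "\<not> eventually P sequentially" unfolding P_def .
  then have "infinite {n. \<not> P n}"
    unfolding cofinite_eq_sequentially[symmetric] eventually_cofinite by simp
  then obtain r :: "nat \<Rightarrow> nat" where r: "strict_mono r" "\<forall>j. r j \<in> {n. \<not> P n}"
    using infinite_enumerate by blast
  then have "\<forall>j. \<exists>x. norm x \<le> R \<and> feasT (shft \<alpha> \<beta> d (a (r j)) x) \<and>
      \<epsilon> \<le> \<bar>gfun \<alpha> \<beta> d (a (r j)) x - Dl \<alpha> \<beta> d x\<bar>"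
    unfolding P_def by (auto simp: not_less)
  then obtain X where X: "\<And>j. norm (X j) \<le> R" "\<And>j. feasT (shft \<alpha> \<beta> d (a (r j)) (X j))"
    "\<And>j. \<epsilon> \<le> \<bar>gfun \<alpha> \<beta> d (a (r j)) (X j) - Dl \<alpha> \<beta> d (X j)\<bar>" by metis
  define x1 where "x1 j = fst (X j)" for j
  define x2 where "x2 j = fst (snd (X j))" for j
  define x3 where "x3 j = snd (snd (X j))" for j
  have Xeq: "X j = (x1 j, x2 j, x3 j)" for j by (simp add: x1_def x2_def x3_def)
  define A where "A j = a (r j)" for j
  define al where "al j = \<alpha> + (1 / A j) *\<^sub>R x1 j" for j
  define be where "be j = \<beta> + (1 / A j) *\<^sub>R x2 j" for j
  define dd where "dd j = d + (1 / A j) *\<^sub>R x3 j" for j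
  have Apos: "0 < A j" for j unfolding A_def by (rule apos)
  have feT: "feasT (shft \<alpha> \<beta> d (A j) (x1 j, x2 j, x3 j))" for j using X(2)[of j] unfolding Xeq A_def .
  have fj: "feas (al j) (be j) (dd j)" for j
    using feT[of j] by (simp add: feasT_def shft_def al_def be_def dd_def)
  have fj': "al j \<in> prob_simplex" "be j \<in> prob_simplex" "\<forall>k l. 0 \<le> dd j $k$l" for j
    using fj[of j] by (auto simp: feas_def)
  have "\<forall>j. \<exists>\<pi>. \<pi> \<in> opt_couplings (al j) (be j) (dd j)" using opt_exists[OF fj'] by blast
  then obtain Pi where Pi: "\<And>j. Pi j \<in> opt_couplings (al j) (be j) (dd j)" by metis
  have "\<forall>j. \<exists>f. f \<in> dual_sols (al j) (be j) (dd j)" using strong_duality(1)[OF fj'] by blast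
  then obtain F where F: "\<And>j. F j \<in> dual_sols (al j) (be j) (dd j)" by metis
  have Alim: "filterlim A at_top sequentially"
    unfolding A_def using filterlim_compose[OF alim filterlim_subseq[OF r(1)]] by (simp add: o_def)
  have Ainv: "(\<lambda>j. inverse (A j)) \<longlonglongrightarrow> 0" by (rule tendsto_inverse_0_at_top[OF Alim])
  then have "Bseq (\<lambda>j. inverse (A j))" by (rule convergent_imp_Bseq[OF convergentI])
  then obtain B where B: "0 < B" "\<And>j. norm (inverse (A j)) \<le> B" by (metis BseqE)
  have nx: "norm (x1 j) \<le> R" "norm (x2 j) \<le> R" "norm (x3 j) \<le> R" for j
  proof -
    have "norm (x1 j, x2 j, x3 j) \<le> R" using X(1)[of j] unfolding Xeq .
    then show "norm (x1 j) \<le> R" "norm (x2 j) \<le> R" "norm (x3 j) \<le> R"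
      by (meson norm_fst_le norm_snd_le order_trans)+
  qed
  have ndd: "norm (dd j - d) \<le> B * R" for j
  proof -
    have "norm (dd j - d) = inverse (A j) * norm (x3 j)"
      unfolding dd_def using Apos[of j] by (simp add: divide_inverse)
    also have "\<dots> \<le> B * R"
    proof (rule mult_mono)
      show "inverse (A j) \<le> B" using B(2)[of j] Apos[of j] by simp
    qed (use B nx(3)[of j] Apos[of j] in auto)
    finally show ?thesis .
  qed
  have R0: "0 \<le> R" using nx(1)[of 0] norm_ge_zero order_trans by blast
  define CF where "CF = real CARD('k) * (2 * (2 * (Mx d + B * R) + 1))"
  have nF: "norm (F j) \<le> CF" for j
  proof -
    have m0: "0 \<le> Mx (dd j)" by (rule Mx_nonneg[OF fj'(3)])
    have "Mx (dd j) \<le> Mx d + B * R" using Mx_lip[of "dd j" d] ndd[of j] by (simp add: abs_le_iff)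
    then have "\<bar>Bx (dd j)\<bar> \<le> 2 * (2 * (Mx d + B * R) + 1)" using m0 by simp
    then have "real CARD('k) * \<bar>Bx (dd j)\<bar> \<le> CF" unfolding CF_def by (intro mult_left_mono) auto
    then show ?thesis using box_norm[OF dual_sols_box[OF F[of j]]] by simp
  qed
  have nPi: "norm (Pi j) \<le> real CARD('k) * (real CARD('k) * 1)" for j
  proof -
    have "\<And>k l. \<bar>Pi j$k$l\<bar> \<le> 1"
      using coupling_le1[OF opt_coupling[OF Pi[of j]] fj'(1)] by (metis abs_of_nonneg)
    then show ?thesis by (rule mat_norm_le)
  qed
  define Z where "Z j = (X j, Pi j, F j)" for j
  have "bounded (range Z)"
    unfolding bounded_iff
  proof (intro exI[of _ "R + (real CARD('k) * (real CARD('k) * 1) + CF)"] ballI)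
    fix z assume "z \<in> range Z"
    then obtain j where zj: "z = Z j" by blast
    have "norm (Z j) \<le> R + (real CARD('k) * (real CARD('k) * 1) + CF)"
      unfolding Z_def using X(1)[of j] nPi[of j] nF[of j]
        norm_Pair_le[of "X j" "(Pi j, F j)"] norm_Pair_le[of "Pi j" "F j"] by linarith
    then show "norm z \<le> R + (real CARD('k) * (real CARD('k) * 1) + CF)" using zj by simp
  qed
  then obtain z s where s: "strict_mono s" "(Z \<circ> s) \<longlonglongrightarrow> z"
    using bounded_imp_convergent_subsequence by blast
  obtain y1 y2 y3 ps fs where zeq: "z = ((y1, y2, y3), ps, fs)" by (metis prod.exhaust)
  have LZ: "(\<lambda>j. Z (s j)) \<longlonglongrightarrow> z" using s(2) by (simp add: o_def)
  have LX: "(\<lambda>j. X (s j)) \<longlonglongrightarrow> (y1, y2, y3)" using tendsto_fst[OF LZ] by (simp add: Z_def zeq)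
  have LP: "(\<lambda>j. Pi (s j)) \<longlonglongrightarrow> ps" using tendsto_fst[OF tendsto_snd[OF LZ]] by (simp add: Z_def zeq)
  have LF: "(\<lambda>j. F (s j)) \<longlonglongrightarrow> fs" using tendsto_snd[OF tendsto_snd[OF LZ]] by (simp add: Z_def zeq)
  have L1: "(\<lambda>j. x1 (s j)) \<longlonglongrightarrow> y1" using tendsto_fst[OF LX] by (simp add: x1_def)
  have L2: "(\<lambda>j. x2 (s j)) \<longlonglongrightarrow> y2" using tendsto_fst[OF tendsto_snd[OF LX]] by (simp add: x2_def)
  have L3: "(\<lambda>j. x3 (s j)) \<longlonglongrightarrow> y3" using tendsto_snd[OF tendsto_snd[OF LX]] by (simp add: x3_def)
  have Ainvs: "(\<lambda>j. inverse (A (s j))) \<longlonglongrightarrow> 0" using LIMSEQ_subseq_LIMSEQ[OF Ainv s(1)] by (simp add: o_def)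
  have Lal: "(\<lambda>j. al (s j)) \<longlonglongrightarrow> \<alpha>" unfolding al_def by (rule lim_shift[OF Ainvs L1])
  have Lbe: "(\<lambda>j. be (s j)) \<longlonglongrightarrow> \<beta>" unfolding be_def by (rule lim_shift[OF Ainvs L2])
  have Ldd: "(\<lambda>j. dd (s j)) \<longlonglongrightarrow> d" unfolding dd_def by (rule lim_shift[OF Ainvs L3])
  have LSW: "(\<lambda>j. SW (al (s j)) (be (s j)) (dd (s j))) \<longlonglongrightarrow> SW \<alpha> \<beta> d"
  proof (rule squeeze0)
    fix j show "\<bar>SW (al (s j)) (be (s j)) (dd (s j)) - SW \<alpha> \<beta> d\<bar> \<le>
      norm (dd (s j) - d) + max (Cst d) (Cst (dd (s j))) * (norm (al (s j) - \<alpha>) + norm (be (s j) - \<beta>))"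
      by (rule SW_diff_bound[OF fe fj])
  next
    have "(\<lambda>j. norm (dd (s j) - d) + max (Cst d) (Cst (dd (s j))) * (norm (al (s j) - \<alpha>) + norm (be (s j) - \<beta>)))
       \<longlonglongrightarrow> 0 + max (Cst d) (Cst d) * (0 + 0)"
      by (intro tendsto_intros tendsto_norm_zero LIM_zero Lal Lbe Ldd lim_Cst)
    then show "(\<lambda>j. norm (dd (s j) - d) + max (Cst d) (Cst (dd (s j))) * (norm (al (s j) - \<alpha>) + norm (be (s j) - \<beta>)))
       \<longlonglongrightarrow> 0" by simp
  qed
  have Pij: "Pi j \<in> couplings (al j) (be j)" "pairing (Pi j) (dd j) = SW (al j) (be j) (dd j)" for j
    using Pi[of j] by (auto simp: opt_couplings_def)
  have psc: "ps \<in> couplings \<alpha> \<beta>"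
    unfolding couplings_def
  proof (intro CollectI conjI allI)
    fix k l
    have "(\<lambda>j. Pi (s j) $ k $ l) \<longlonglongrightarrow> ps $ k $ l" by (intro tendsto_vec_nth LP)
    then show "0 \<le> ps $ k $ l"
      by (rule tendsto_le[OF trivial_limit_sequentially _ tendsto_const])
         (use Pij(1) in \<open>auto simp: couplings_def\<close>)
  next
    fix k
    have "(\<lambda>j. \<Sum>l\<in>UNIV. Pi (s j) $ k $ l) \<longlonglongrightarrow> (\<Sum>l\<in>UNIV. ps $ k $ l)" by (intro tendsto_intros LP)
    moreover have "(\<lambda>j. \<Sum>l\<in>UNIV. Pi (s j) $ k $ l) = (\<lambda>j. al (s j) $ k)"
      using Pij(1) by (auto simp: couplings_def)
    moreover have "(\<lambda>j. al (s j) $ k) \<longlonglongrightarrow> \<alpha> $ k" by (intro tendsto_vec_nth Lal)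
    ultimately show "(\<Sum>l\<in>UNIV. ps $ k $ l) = \<alpha> $ k" using LIMSEQ_unique by metis
  next
    fix l
    have "(\<lambda>j. \<Sum>k\<in>UNIV. Pi (s j) $ k $ l) \<longlonglongrightarrow> (\<Sum>k\<in>UNIV. ps $ k $ l)" by (intro tendsto_intros LP)
    moreover have "(\<lambda>j. \<Sum>k\<in>UNIV. Pi (s j) $ k $ l) = (\<lambda>j. be (s j) $ l)"
      using Pij(1) by (auto simp: couplings_def)
    moreover have "(\<lambda>j. be (s j) $ l) \<longlonglongrightarrow> \<beta> $ l" by (intro tendsto_vec_nth Lbe)
    ultimately show "(\<Sum>k\<in>UNIV. ps $ k $ l) = \<beta> $ l" using LIMSEQ_unique by metis
  qed
  have "(\<lambda>j. pairing (Pi (s j)) (dd (s j))) \<longlonglongrightarrow> pairing ps d"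
    unfolding pairing_def by (intro tendsto_intros LP Ldd)
  moreover have "(\<lambda>j. pairing (Pi (s j)) (dd (s j))) = (\<lambda>j. SW (al (s j)) (be (s j)) (dd (s j)))"
    using Pij(2) by auto
  ultimately have "pairing ps d = SW \<alpha> \<beta> d" using LSW LIMSEQ_unique by metis
  then have psopt: "ps \<in> opt_couplings \<alpha> \<beta> d" using psc by (simp add: opt_couplings_def)
  have Lcc: "(\<lambda>j. cctrans (F (s j)) (dd (s j))) \<longlonglongrightarrow> cctrans fs d" by (rule lim_cctrans[OF LF Ldd])
  have Lc: "(\<lambda>j. ctrans (F (s j)) (dd (s j))) \<longlonglongrightarrow> ctrans fs d" by (rule lim_ctrans[OF LF Ldd])
  have "(\<lambda>j. dual_obj (al (s j)) (be (s j)) (dd (s j)) (F (s j))) \<longlonglongrightarrow> dual_obj \<alpha> \<beta> d fs"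
    unfolding dual_obj_def by (intro tendsto_intros Lcc Lc Lal Lbe)
  moreover have "(\<lambda>j. dual_obj (al (s j)) (be (s j)) (dd (s j)) (F (s j))) = (\<lambda>j. SW (al (s j)) (be (s j)) (dd (s j)))"
    using strong_duality(2)[OF fj' F] by auto
  ultimately have fsobj: "dual_obj \<alpha> \<beta> d fs = SW \<alpha> \<beta> d" using LSW LIMSEQ_unique by metis
  have fsbox: "fs \<in> dual_box d"
    unfolding dual_box_eq
  proof (intro CollectI allI)
    fix k
    have "(\<lambda>j. \<bar>F (s j) $ k\<bar>) \<longlonglongrightarrow> \<bar>fs $ k\<bar>" by (intro tendsto_intros LF)
    moreover have "(\<lambda>j. Bx (dd (s j))) \<longlonglongrightarrow> Bx d" by (intro tendsto_intros lim_Mx Ldd)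
    moreover have "\<forall>j. \<bar>F (s j) $ k\<bar> \<le> Bx (dd (s j))"
      using dual_sols_box[OF F] unfolding dual_box_eq by blast
    ultimately show "\<bar>fs $ k\<bar> \<le> Bx d"
      by (intro tendsto_le[OF trivial_limit_sequentially]) (auto intro: always_eventually)
  qed
  have fsS: "fs \<in> dual_sols \<alpha> \<beta> d"
    unfolding dual_sols_def using fsbox fsobj dual_le_SW[OF a0(1,2)] by auto
  define lo where "lo j = pairing (Pi (s j)) (x3 (s j)) - pairing ps (x3 (s j))" for j
  define up where "up j = (cctrans (F (s j)) (dd (s j)) \<bullet> x1 (s j) + ctrans (F (s j)) (dd (s j)) \<bullet> x2 (s j))
      - (cctrans fs d \<bullet> x1 (s j) + ctrans fs d \<bullet> x2 (s j))" for j
  have Llo: "lo \<longlonglongrightarrow> 0"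
  proof -
    have "lo \<longlonglongrightarrow> pairing ps y3 - pairing ps y3"
      unfolding lo_def pairing_def by (intro tendsto_intros LP L3)
    then show ?thesis by simp
  qed
  have Lup: "up \<longlonglongrightarrow> 0"
  proof -
    have "up \<longlonglongrightarrow> (cctrans fs d \<bullet> y1 + ctrans fs d \<bullet> y2) - (cctrans fs d \<bullet> y1 + ctrans fs d \<bullet> y2)"
      unfolding up_def by (intro tendsto_intros Lcc Lc L1 L2)
    then show ?thesis by simp
  qed
  have bnd: "\<bar>gfun \<alpha> \<beta> d (a (r (s j))) (X (s j)) - Dl \<alpha> \<beta> d (X (s j))\<bar> \<le> \<bar>lo j\<bar> + \<bar>up j\<bar>" for j
  proof -
    have l: "lo j \<le> gfun \<alpha> \<beta> d (A (s j)) (x1 (s j), x2 (s j), x3 (s j)) - Dl \<alpha> \<beta> d (x1 (s j), x2 (s j), x3 (s j))"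
      unfolding lo_def
      by (rule err_lower[OF fe feT Apos _ psopt]) (use Pi[of "s j"] in \<open>simp add: al_def be_def dd_def\<close>)
    have u: "gfun \<alpha> \<beta> d (A (s j)) (x1 (s j), x2 (s j), x3 (s j)) - Dl \<alpha> \<beta> d (x1 (s j), x2 (s j), x3 (s j)) \<le> up j"
      unfolding up_def dd_def
      by (rule err_upper[OF fe feT Apos _ fsS]) (use F[of "s j"] in \<open>simp add: al_def be_def dd_def\<close>)
    show ?thesis using l u unfolding Xeq A_def by (simp add: abs_le_iff) linarith
  qed
  have "(\<lambda>j. \<bar>lo j\<bar> + \<bar>up j\<bar>) \<longlonglongrightarrow> \<bar>0\<bar> + \<bar>0\<bar>" by (intro tendsto_intros Llo Lup)
  then have "eventually (\<lambda>j. \<bar>lo j\<bar> + \<bar>up j\<bar> < \<epsilon>) sequentially" using eps by (simp add: order_tendstoD(2))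
  moreover have "\<forall>j. \<epsilon> \<le> \<bar>lo j\<bar> + \<bar>up j\<bar>" using X(3) bnd order_trans by blast
  ultimately show False unfolding eventually_sequentially by (meson le_refl not_less)
qed



lemma closed_simplex: "closed (prob_simplex :: (real^'k::finite) set)"
  unfolding prob_simplex_def
  by (intro closed_Collect_conj closed_Collect_all closed_Collect_le closed_Collect_eq continuous_intros)

lemma closed_nonneg_mat: "closed {d :: real^'k::finite^'k. \<forall>k l. 0 \<le> d$k$l}"
  by (intro closed_Collect_all closed_Collect_le continuous_intros)

lemma feasT_set: "{y. feasT y} = prob_simplex \<times> (prob_simplex \<times> {d :: real^'k::finite^'k. \<forall>k l. 0 \<le> d$k$l})"
  by (auto simp: feasT_def feas_def)

lemma closed_feasT: "closed {y :: (real^'k::finite) \<times> (real^'k) \<times> (real^'k^'k). feasT y}"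
  unfolding feasT_set by (intro closed_Times closed_simplex closed_nonneg_mat)

lemma SWT_cont: "continuous_on {y :: (real^'k::finite) \<times> (real^'k) \<times> (real^'k^'k). feasT y} SWT"
proof (rule continuous_on_sequentiallyI)
  fix u and y :: "(real^'k) \<times> (real^'k) \<times> (real^'k^'k)"
  assume u: "\<forall>n. u n \<in> {y. feasT y}" and y: "y \<in> {y. feasT y}" and lim: "u \<longlonglongrightarrow> y"
  obtain \<alpha> \<beta> d where yeq: "y = (\<alpha>, \<beta>, d)" by (metis prod.exhaust)
  have fy: "feas \<alpha> \<beta> d" using y by (simp add: feasT_def yeq)
  define al where "al n = fst (u n)" for n
  define be where "be n = fst (snd (u n))" for n
  define dd where "dd n = snd (snd (u n))" for n
  have ueq: "u n = (al n, be n, dd n)" for n by (simp add: al_def be_def dd_def)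
  have fu: "feas (al n) (be n) (dd n)" for n using u by (simp add: feasT_def al_def be_def dd_def)
  have Lal: "al \<longlonglongrightarrow> \<alpha>" unfolding al_def using tendsto_fst[OF lim] by (simp add: yeq)
  have Lbe: "be \<longlonglongrightarrow> \<beta>" unfolding be_def using tendsto_fst[OF tendsto_snd[OF lim]] by (simp add: yeq)
  have Ldd: "dd \<longlonglongrightarrow> d" unfolding dd_def using tendsto_snd[OF tendsto_snd[OF lim]] by (simp add: yeq)
  have "(\<lambda>n. SW (al n) (be n) (dd n)) \<longlonglongrightarrow> SW \<alpha> \<beta> d"
  proof (rule squeeze0)
    fix j show "\<bar>SW (al j) (be j) (dd j) - SW \<alpha> \<beta> d\<bar> \<le>
      norm (dd j - d) + max (Cst d) (Cst (dd j)) * (norm (al j - \<alpha>) + norm (be j - \<beta>))"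
      by (rule SW_diff_bound[OF fy fu])
  next
    have "(\<lambda>j. norm (dd j - d) + max (Cst d) (Cst (dd j)) * (norm (al j - \<alpha>) + norm (be j - \<beta>)))
       \<longlonglongrightarrow> 0 + max (Cst d) (Cst d) * (0 + 0)"
      by (intro tendsto_intros tendsto_norm_zero LIM_zero Lal Lbe Ldd lim_Cst)
    then show "(\<lambda>j. norm (dd j - d) + max (Cst d) (Cst (dd j)) * (norm (al j - \<alpha>) + norm (be j - \<beta>)))
       \<longlonglongrightarrow> 0" by simp
  qed
  then show "(\<lambda>n. SWT (u n)) \<longlonglongrightarrow> SWT y" by (simp add: SWT_def ueq yeq)
qed

lemma SWT_ext_meas:
  "(\<lambda>y. if y \<in> {y :: (real^'k::finite) \<times> (real^'k) \<times> (real^'k^'k). feasT y} then SWT y else 0) \<in> borel_measurable borel"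
  by (rule borel_measurable_continuous_on_if[OF borel_closed[OF closed_feasT] SWT_cont]) simp



definition psi :: "real \<Rightarrow> 'a::real_normed_vector \<Rightarrow> real" where
  "psi R x = min 1 (max 0 (norm x - R))"

lemma psi_cont: "continuous_on UNIV (psi R)"
  unfolding psi_def by (intro continuous_intros)

lemma psi_range: "0 \<le> psi R x" "psi R x \<le> 1"
  unfolding psi_def by auto

lemma psi_bounded: "bounded (range (psi R))"
  unfolding bounded_iff by (intro exI[of _ 1]) (auto simp: psi_def)

lemma psi_one: "R + 1 < norm x \<Longrightarrow> psi R x = 1"
  unfolding psi_def by auto

lemma psi_lim: "(\<lambda>m. psi (real m) x) \<longlonglongrightarrow> 0"
proof (rule tendsto_eventually)
  show "\<forall>\<^sub>F m in sequentially. psi (real m) x = 0"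
    unfolding eventually_sequentially
  proof (intro exI[of _ "nat \<lceil>norm x\<rceil>"] allI impI)
    fix m assume "nat \<lceil>norm x\<rceil> \<le> m"
    then have "norm x \<le> real m" by linarith
    then show "psi (real m) x = 0" unfolding psi_def by simp
  qed
qed

lemma tight:
  assumes "prob_space N" "G \<in> borel_measurable N" "0 < \<eta>"
  shows "\<exists>m::nat. (\<integral>\<omega>. psi (real m) (G \<omega>) \<partial>N) < \<eta>"
proof -
  have fm: "finite_measure N" using assms(1) by (simp add: prob_space_def)
  have meas: "(\<lambda>\<omega>. psi (real m) (G \<omega>)) \<in> borel_measurable N" for m
    by (rule measurable_compose[OF assms(2) borel_measurable_continuous_onI[OF psi_cont]])
  have "(\<lambda>m. \<integral>\<omega>. psi (real m) (G \<omega>) \<partial>N) \<longlonglongrightarrow> (\<integral>\<omega>. 0 \<partial>N)"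
  proof (rule integral_dominated_convergence[where w = "\<lambda>_. 1"])
    show "(\<lambda>\<omega>. 0::real) \<in> borel_measurable N" by simp
    show "(\<lambda>\<omega>. psi (real m) (G \<omega>)) \<in> borel_measurable N" for m by (rule meas)
    show "integrable N (\<lambda>_. 1::real)" using fm by (rule finite_measure.integrable_const)
    show "AE \<omega> in N. (\<lambda>m. psi (real m) (G \<omega>)) \<longlonglongrightarrow> 0" by (intro AE_I2 psi_lim)
    show "AE \<omega> in N. norm (psi (real m) (G \<omega>)) \<le> 1" for m by (intro AE_I2) (simp add: psi_range abs_le_iff)
  qed
  then have "(\<lambda>m. \<integral>\<omega>. psi (real m) (G \<omega>) \<partial>N) \<longlonglongrightarrow> 0" by simp
  then have "eventually (\<lambda>m. (\<integral>\<omega>. psi (real m) (G \<omega>) \<partial>N) < \<eta>) sequentially"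
    using assms(3) by (simp add: order_tendstoD(2))
  then show ?thesis by (meson eventually_sequentially order_refl)
qed




theorem mainTheorem20:
  fixes \<alpha> \<beta> :: "real^'k::finite" and d :: "real^'k^'k"
    and M :: "nat \<Rightarrow> 'w measure" and N :: "'v measure"
    and \<alpha>n \<beta>n :: "nat \<Rightarrow> 'w \<Rightarrow> real^'k" and dn :: "nat \<Rightarrow> 'w \<Rightarrow> real^'k^'k"
    and a :: "nat \<Rightarrow> real"
    and G\<alpha> G\<beta> :: "'v \<Rightarrow> real^'k" and Gd :: "'v \<Rightarrow> real^'k^'k"
  assumes "\<alpha> \<in> prob_simplex" and "\<beta> \<in> prob_simplex" and "\<forall>k l. 0 \<le> d$k$l"
    and "\<And>n. prob_space (M n)"
    and "\<And>n. \<alpha>n n \<in> borel_measurable (M n)" and "\<And>n. \<beta>n n \<in> borel_measurable (M n)"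
    and "\<And>n. dn n \<in> borel_measurable (M n)"
    and "\<And>n \<omega>. \<omega> \<in> space (M n) \<Longrightarrow> \<alpha>n n \<omega> \<in> prob_simplex"
    and "\<And>n \<omega>. \<omega> \<in> space (M n) \<Longrightarrow> \<beta>n n \<omega> \<in> prob_simplex"
    and "\<And>n \<omega> k l. \<omega> \<in> space (M n) \<Longrightarrow> 0 \<le> dn n \<omega> $k$l"
    and "\<And>n. 0 < a n" and "filterlim a at_top sequentially"
    and "prob_space N"
    and "G\<alpha> \<in> borel_measurable N" and "G\<beta> \<in> borel_measurable N" and "Gd \<in> borel_measurable N"
    and "weak_conv_rv M
           (\<lambda>n \<omega>. (a n *\<^sub>R (\<alpha>n n \<omega> - \<alpha>), a n *\<^sub>R (\<beta>n n \<omega> - \<beta>), a n *\<^sub>R (dn n \<omega> - d)))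
           N (\<lambda>\<omega>. (G\<alpha> \<omega>, G\<beta> \<omega>, Gd \<omega>))"
  shows "weak_conv_rv M
           (\<lambda>n \<omega>. a n * (SW (\<alpha>n n \<omega>) (\<beta>n n \<omega>) (dn n \<omega>) - SW \<alpha> \<beta> d))
           N (\<lambda>\<omega>. Inf ((\<lambda>\<pi>. pairing \<pi> (Gd \<omega>)) ` opt_couplings \<alpha> \<beta> d)
                  + Sup ((\<lambda>f. cctrans f d \<bullet> G\<alpha> \<omega> + ctrans f d \<bullet> G\<beta> \<omega>) ` dual_sols \<alpha> \<beta> d))"
proof -
  note fe0 = assms(1,2,3)
  have fe: "feas \<alpha> \<beta> d" using fe0 by (simp add: feas_def)
  have apos: "\<And>n. 0 < a n" by fact
  have alim: "filterlim a at_top sequentially" by fact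
  have fmN: "\<And>n. finite_measure (M n)" using assms(4) by (simp add: prob_space_def)
  define Xn where "Xn n \<omega> = (a n *\<^sub>R (\<alpha>n n \<omega> - \<alpha>), a n *\<^sub>R (\<beta>n n \<omega> - \<beta>), a n *\<^sub>R (dn n \<omega> - d))" for n \<omega>
  define G where "G \<omega> = (G\<alpha> \<omega>, G\<beta> \<omega>, Gd \<omega>)" for \<omega>
  define Yn where "Yn n \<omega> = a n * (SW (\<alpha>n n \<omega>) (\<beta>n n \<omega>) (dn n \<omega>) - SW \<alpha> \<beta> d)" for n \<omega>
  have W: "\<forall>h :: _ \<Rightarrow> real. continuous_on UNIV h \<and> bounded (range h) \<longrightarrow>
      (\<lambda>n. \<integral>\<omega>. h (Xn n \<omega>) \<partial>M n) \<longlonglongrightarrow> (\<integral>\<omega>. h (G \<omega>) \<partial>N)"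
    using assms(17) unfolding weak_conv_rv_def Xn_def G_def .
  have hyp: "\<And>h :: _ \<Rightarrow> real. continuous_on UNIV h \<Longrightarrow> bounded (range h) \<Longrightarrow>
      (\<lambda>n. \<integral>\<omega>. h (Xn n \<omega>) \<partial>M n) \<longlonglongrightarrow> (\<integral>\<omega>. h (G \<omega>) \<partial>N)"
    using W by blast
  have XnM: "Xn n \<in> borel_measurable (M n)" for n
    unfolding Xn_def
    by (intro borel_measurable_Pair borel_measurable_scaleR borel_measurable_const borel_measurable_diff assms(5,6,7))
  have GM: "G \<in> borel_measurable N"
    unfolding G_def by (intro borel_measurable_Pair assms(14,15,16))
  have shX: "shft \<alpha> \<beta> d (a n) (Xn n \<omega>) = (\<alpha>n n \<omega>, \<beta>n n \<omega>, dn n \<omega>)" for n \<omega>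
    using apos[of n] by (simp add: shft_def Xn_def)
  have feX: "feasT (shft \<alpha> \<beta> d (a n) (Xn n \<omega>))" if "\<omega> \<in> space (M n)" for n \<omega>
    using assms(8)[OF that] assms(9)[OF that] assms(10)[OF that] by (simp add: shX feasT_def feas_def)
  have YX: "Yn n \<omega> = gfun \<alpha> \<beta> d (a n) (Xn n \<omega>)" for n \<omega>
    unfolding gfun_def shX Yn_def by (simp add: SWT_def)
  have Dleq: "Dl \<alpha> \<beta> d (G \<omega>) = Inf ((\<lambda>\<pi>. pairing \<pi> (Gd \<omega>)) ` opt_couplings \<alpha> \<beta> d)
                  + Sup ((\<lambda>f. cctrans f d \<bullet> G\<alpha> \<omega> + ctrans f d \<bullet> G\<beta> \<omega>) ` dual_sols \<alpha> \<beta> d)" for \<omega>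
    by (simp add: Dl_def Pd_def Qd_def G_def)
  have YnM: "(\<lambda>\<omega>. h (Yn n \<omega>)) \<in> borel_measurable (M n)" if hc: "continuous_on UNIV h" for h :: "real \<Rightarrow> real" and n
  proof -
    define T where "T \<omega> = (\<alpha>n n \<omega>, \<beta>n n \<omega>, dn n \<omega>)" for \<omega>
    have TM: "T \<in> borel_measurable (M n)" unfolding T_def by (intro borel_measurable_Pair assms(5,6,7))
    define E where "E y = (if y \<in> {y :: (real^'k) \<times> (real^'k) \<times> (real^'k^'k). feasT y} then SWT y else 0)" for y
    have EM: "(\<lambda>\<omega>. E (T \<omega>)) \<in> borel_measurable (M n)"
      unfolding E_def by (rule measurable_compose[OF TM SWT_ext_meas])
    have fM: "(\<lambda>\<omega>. h (a n * (E (T \<omega>) - SW \<alpha> \<beta> d))) \<in> borel_measurable (M n)"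
      by (rule measurable_compose[OF _ borel_measurable_continuous_onI[OF hc]])
         (intro borel_measurable_times borel_measurable_diff borel_measurable_const EM)
    have eq: "\<And>\<omega>. \<omega> \<in> space (M n) \<Longrightarrow> h (a n * (E (T \<omega>) - SW \<alpha> \<beta> d)) = h (Yn n \<omega>)"
      using feX unfolding E_def T_def Yn_def shX by (simp add: SWT_def)
    show ?thesis using measurable_cong[where M="M n" and M'=borel, OF eq] fM by simp
  qed
  show ?thesis
    unfolding weak_conv_rv_def
  proof (intro allI impI, elim conjE)
    fix h :: "real \<Rightarrow> real" assume hc: "continuous_on UNIV h" and hb: "bounded (range h)"
    obtain Bh0 where "\<forall>y\<in>range h. norm y \<le> Bh0" using hb unfolding bounded_iff by blast
    then have Bh: "\<And>y. \<bar>h y\<bar> \<le> max Bh0 1" by (metis max.coboundedI1 rangeI real_norm_def)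
    define Bh where "Bh = max Bh0 1"
    have Bh': "\<And>y. \<bar>h y\<bar> \<le> Bh" "0 < Bh" using Bh unfolding Bh_def by auto
    have hDc: "continuous_on UNIV (\<lambda>x. h (Dl \<alpha> \<beta> d x))"
      by (rule continuous_on_compose2[OF hc Dl_cont[OF fe]]) auto
    have hDb: "bounded (range (\<lambda>x. h (Dl \<alpha> \<beta> d x)))"
      by (rule bounded_subset[OF hb]) auto
    have T1: "(\<lambda>n. \<integral>\<omega>. h (Dl \<alpha> \<beta> d (Xn n \<omega>)) \<partial>M n) \<longlonglongrightarrow> (\<integral>\<omega>. h (Dl \<alpha> \<beta> d (G \<omega>)) \<partial>N)"
      using hyp[OF hDc hDb] .
    have intY: "integrable (M n) (\<lambda>\<omega>. h (Yn n \<omega>))" for n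
      by (rule finite_measure.integrable_const_bound[OF fmN, where B=Bh]) (simp_all add: Bh' YnM[OF hc])
    have XDM: "(\<lambda>\<omega>. h (Dl \<alpha> \<beta> d (Xn n \<omega>))) \<in> borel_measurable (M n)" for n
      by (rule measurable_compose[OF XnM borel_measurable_continuous_onI[OF hDc]])
    have intD: "integrable (M n) (\<lambda>\<omega>. h (Dl \<alpha> \<beta> d (Xn n \<omega>)))" for n
      by (rule finite_measure.integrable_const_bound[OF fmN, where B=Bh]) (simp_all add: Bh' XDM)
    have T2: "(\<lambda>n. (\<integral>\<omega>. h (Yn n \<omega>) \<partial>M n) - (\<integral>\<omega>. h (Dl \<alpha> \<beta> d (Xn n \<omega>)) \<partial>M n)) \<longlonglongrightarrow> 0"
      unfolding tendsto_iff dist_real_def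
    proof (intro allI impI)
      fix e :: real assume e: "0 < e"
      define \<eta> where "\<eta> = e / (2 * (1 + 2 * Bh))"
      have pos: "0 < 2 * (1 + 2 * Bh)" using Bh'(2) by simp
      have eta1: "0 < \<eta>" unfolding \<eta>_def using e pos by simp
      have "\<eta> * (1 + 2 * Bh) = e / 2" unfolding \<eta>_def using pos by (simp add: field_simps)
      then have eta: "0 < \<eta>" "\<eta> * (1 + 2 * Bh) < e" using e eta1 by auto
      obtain m :: nat where m: "(\<integral>\<omega>. psi (real m) (G \<omega>) \<partial>N) < \<eta>"
        using tight[OF assms(13) GM eta(1)] by blast
      have "(\<lambda>n. \<integral>\<omega>. psi (real m) (Xn n \<omega>) \<partial>M n) \<longlonglongrightarrow> (\<integral>\<omega>. psi (real m) (G \<omega>) \<partial>N)"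
        by (rule hyp[OF psi_cont psi_bounded])
      then have ev1: "eventually (\<lambda>n. (\<integral>\<omega>. psi (real m) (Xn n \<omega>) \<partial>M n) < \<eta>) sequentially"
        using m by (simp add: order_tendstoD(2))
      define R1 where "R1 = real m + 1"
      define Cd where "Cd = \<bar>Dl \<alpha> \<beta> d 0\<bar> + (1 + 2 * Cst d) * R1"
      have Dlb: "\<bar>Dl \<alpha> \<beta> d x\<bar> \<le> Cd" if "norm x \<le> R1" for x
      proof -
        have "\<bar>Dl \<alpha> \<beta> d x - Dl \<alpha> \<beta> d 0\<bar> \<le> (1 + 2 * Cst d) * dist x 0" by (rule Dl_lip[OF fe])
        also have "\<dots> \<le> (1 + 2 * Cst d) * R1" using that Cst_nonneg[of d] by (intro mult_left_mono) auto
        finally show ?thesis unfolding Cd_def by linarith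
      qed
      have "uniformly_continuous_on (cball 0 (Cd + 1)) h"
        by (rule compact_uniformly_continuous[OF continuous_on_subset[OF hc]]) auto
      then obtain \<delta> where \<delta>: "0 < \<delta>" "\<And>y y'. y \<in> cball 0 (Cd + 1) \<Longrightarrow> y' \<in> cball 0 (Cd + 1) \<Longrightarrow>
          dist y' y < \<delta> \<Longrightarrow> dist (h y') (h y) < \<eta>"
        unfolding uniformly_continuous_on_def using eta(1) by metis
      have ev2: "eventually (\<lambda>n. \<forall>x. norm x \<le> R1 \<longrightarrow> feasT (shft \<alpha> \<beta> d (a n) x) \<longrightarrow>
            \<bar>gfun \<alpha> \<beta> d (a n) x - Dl \<alpha> \<beta> d x\<bar> < min \<delta> 1) sequentially"
        by (rule unif_approx[OF fe apos alim]) (use \<delta>(1) in simp)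
      show "eventually (\<lambda>n. \<bar>(\<integral>\<omega>. h (Yn n \<omega>) \<partial>M n) - (\<integral>\<omega>. h (Dl \<alpha> \<beta> d (Xn n \<omega>)) \<partial>M n) - 0\<bar> < e) sequentially"
        using ev1 ev2
      proof eventually_elim
        case (elim n)
        have pw: "\<bar>h (Yn n \<omega>) - h (Dl \<alpha> \<beta> d (Xn n \<omega>))\<bar> \<le> \<eta> + 2 * Bh * psi (real m) (Xn n \<omega>)"
          if \<omega>: "\<omega> \<in> space (M n)" for \<omega>
        proof (cases "norm (Xn n \<omega>) \<le> R1")
          case True
          have cl: "\<bar>Yn n \<omega> - Dl \<alpha> \<beta> d (Xn n \<omega>)\<bar> < min \<delta> 1"
            using elim(2) True feX[OF \<omega>] unfolding YX by blast
          have b1: "\<bar>Dl \<alpha> \<beta> d (Xn n \<omega>)\<bar> \<le> Cd" by (rule Dlb[OF True])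
          have "dist (h (Yn n \<omega>)) (h (Dl \<alpha> \<beta> d (Xn n \<omega>))) < \<eta>"
            by (rule \<delta>(2)) (use cl b1 in \<open>auto simp: dist_real_def\<close>)
          moreover have "0 \<le> 2 * Bh * psi (real m) (Xn n \<omega>)" using Bh'(2) psi_range(1)[of "real m" "Xn n \<omega>"] by simp
          ultimately show ?thesis by (simp add: dist_real_def)
        next
          case False
          then have "psi (real m) (Xn n \<omega>) = 1" by (intro psi_one) (simp add: R1_def)
          moreover have "\<bar>h (Yn n \<omega>) - h (Dl \<alpha> \<beta> d (Xn n \<omega>))\<bar> \<le> 2 * Bh"
            using Bh'(1)[of "Yn n \<omega>"] Bh'(1)[of "Dl \<alpha> \<beta> d (Xn n \<omega>)"] by linarith
          ultimately show ?thesis using eta(1) by simp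
        qed
        have psiM: "(\<lambda>\<omega>. psi (real m) (Xn n \<omega>)) \<in> borel_measurable (M n)"
          by (rule measurable_compose[OF XnM borel_measurable_continuous_onI[OF psi_cont]])
        have psia: "\<And>\<omega>. norm (psi (real m) (Xn n \<omega>)) \<le> 1" using psi_range by (simp add: abs_le_iff) (smt (verit) psi_range)
        have ipsi: "integrable (M n) (\<lambda>\<omega>. psi (real m) (Xn n \<omega>))"
          by (rule finite_measure.integrable_const_bound[OF fmN, where B=1]) (use psia psiM in \<open>auto intro: AE_I2\<close>)
        have ibound: "integrable (M n) (\<lambda>\<omega>. \<eta> + 2 * Bh * psi (real m) (Xn n \<omega>))"
          by (rule Bochner_Integration.integrable_add[OF finite_measure.integrable_const[OF fmN] integrable_mult_right[OF ipsi]])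
        have "\<bar>(\<integral>\<omega>. h (Yn n \<omega>) \<partial>M n) - (\<integral>\<omega>. h (Dl \<alpha> \<beta> d (Xn n \<omega>)) \<partial>M n)\<bar>
            = \<bar>\<integral>\<omega>. h (Yn n \<omega>) - h (Dl \<alpha> \<beta> d (Xn n \<omega>)) \<partial>M n\<bar>"
          using intY[of n] intD[of n] by simp
        also have "\<dots> \<le> (\<integral>\<omega>. \<bar>h (Yn n \<omega>) - h (Dl \<alpha> \<beta> d (Xn n \<omega>))\<bar> \<partial>M n)"
          using integral_norm_bound[of "M n" "\<lambda>\<omega>. h (Yn n \<omega>) - h (Dl \<alpha> \<beta> d (Xn n \<omega>))"] by simp
        also have "\<dots> \<le> (\<integral>\<omega>. \<eta> + 2 * Bh * psi (real m) (Xn n \<omega>) \<partial>M n)"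
          by (rule integral_mono[OF _ ibound pw]) (use intY[of n] intD[of n] in auto)
        also have "\<dots> = (\<integral>\<omega>. \<eta> \<partial>M n) + (\<integral>\<omega>. 2 * Bh * psi (real m) (Xn n \<omega>) \<partial>M n)"
          by (rule Bochner_Integration.integral_add[OF finite_measure.integrable_const[OF fmN] integrable_mult_right[OF ipsi]])
        also have "\<dots> = \<eta> + 2 * Bh * (\<integral>\<omega>. psi (real m) (Xn n \<omega>) \<partial>M n)"
        proof -
          have "measure (M n) (space (M n)) = 1" using prob_space.prob_space[OF assms(4)[of n]] .
          then show ?thesis by (simp add: integral_mult_right_zero)
        qed
        also have "\<dots> \<le> \<eta> + 2 * Bh * \<eta>" using elim(1) Bh'(2) by simp
        also have "\<dots> < e" using eta(2) by (simp add: algebra_simps)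
        finally show ?case by simp
      qed
    qed
    have "(\<lambda>n. ((\<integral>\<omega>. h (Yn n \<omega>) \<partial>M n) - (\<integral>\<omega>. h (Dl \<alpha> \<beta> d (Xn n \<omega>)) \<partial>M n))
           + (\<integral>\<omega>. h (Dl \<alpha> \<beta> d (Xn n \<omega>)) \<partial>M n)) \<longlonglongrightarrow> 0 + (\<integral>\<omega>. h (Dl \<alpha> \<beta> d (G \<omega>)) \<partial>N)"
      by (rule tendsto_add[OF T2 T1])
    then show "(\<lambda>n. \<integral>\<omega>. h (a n * (SW (\<alpha>n n \<omega>) (\<beta>n n \<omega>) (dn n \<omega>) - SW \<alpha> \<beta> d)) \<partial>M n)
        \<longlonglongrightarrow> (\<integral>\<omega>. h (Inf ((\<lambda>\<pi>. pairing \<pi> (Gd \<omega>)) ` opt_couplings \<alpha> \<beta> d)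
                  + Sup ((\<lambda>f. cctrans f d \<bullet> G\<alpha> \<omega> + ctrans f d \<bullet> G\<beta> \<omega>) ` dual_sols \<alpha> \<beta> d)) \<partial>N)"
      unfolding Dleq Yn_def by (simp only: diff_add_cancel add_0_left)
  qed
qed


end
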